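(* Let $(\Omega,\Sigma,\mu)$ be a measure space. The following are equivalent: (1) $L_1(\mu)$ has the Daugavet property; (2) $L_1(\mu)$ contains a ccs Daugavet point; (3) $L_1(\mu)$ has the strong diameter 2 property; (4) $\mu$ has no atom of finite measure.
   Context: A Banach space $Z$ has the Daugavet property if $\|\mathrm{Id}+T\|=1+\|T\|$ for every rank-one operator $T:Z\to Z$. Slices of $B_Z$ are non-empty sets $\{w\in B_Z:\operatorname{Re}z^*(w)>\|z^*\|-\delta\}$ ($z^*\in Z^*$, $\delta>0$); a ccs is $\sum_{i=1}^n\lambda_iS_i$ with $\lambda_i\in(0,1]$, $\sum\lambda_i=1$, $S_i$ slices. $z\in S_Z$ is a ccs Daugavet point if $\sup_{w\in C}\|z-w\|=2$ for every ccs $C$ of $B_Z$. $Z$ has the strong diameter 2 property if every ccs of $B_Z$ has diameter $2$. *)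

theory Defs
  imports "HOL-Analysis.Analysis"
begin

text \<open>L_1(mu) over the reals, realised on integrable functions with the L1 seminorm
  (elements equal a.e. are identified implicitly: all notions below depend only
  on the seminorm, and bounded functionals vanish on null functions).\<close>

definition L1set :: "'a measure \<Rightarrow> ('a \<Rightarrow> real) set" where
  "L1set M = {f. integrable M f}"

definition L1norm :: "'a measure \<Rightarrow> ('a \<Rightarrow> real) \<Rightarrow> real" where
  "L1norm M f = (\<integral>x. \<bar>f x\<bar> \<partial>M)"

definition L1ball :: "'a measure \<Rightarrow> ('a \<Rightarrow> real) set" where
  "L1ball M = {f \<in> L1set M. L1norm M f \<le> 1}"

definition L1sphere :: "'a measure \<Rightarrow> ('a \<Rightarrow> real) set" where
  "L1sphere M = {f \<in> L1set M. L1norm M f = 1}"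

definition L1_functional :: "'a measure \<Rightarrow> (('a \<Rightarrow> real) \<Rightarrow> real) \<Rightarrow> bool" where
  "L1_functional M \<phi> \<longleftrightarrow>
     (\<forall>f\<in>L1set M. \<forall>g\<in>L1set M. \<phi> (\<lambda>x. f x + g x) = \<phi> f + \<phi> g) \<and>
     (\<forall>f\<in>L1set M. \<forall>c. \<phi> (\<lambda>x. c * f x) = c * \<phi> f) \<and>
     (\<exists>C. \<forall>f\<in>L1set M. \<bar>\<phi> f\<bar> \<le> C * L1norm M f)"

definition L1_dual_norm :: "'a measure \<Rightarrow> (('a \<Rightarrow> real) \<Rightarrow> real) \<Rightarrow> real" where
  "L1_dual_norm M \<phi> = (SUP f\<in>L1ball M. \<bar>\<phi> f\<bar>)"

text \<open>Daugavet property: every rank-one operator T = \<phi> \<otimes> g (with \<phi> \<noteq> 0, g \<noteq> 0),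
  T f = \<phi>(f) g, satisfies ||Id + T|| = 1 + ||T||, where ||T|| = ||\<phi>|| ||g||.\<close>
definition L1_daugavet :: "'a measure \<Rightarrow> bool" where
  "L1_daugavet M \<longleftrightarrow>
     (\<forall>\<phi> g. L1_functional M \<phi> \<and> L1_dual_norm M \<phi> \<noteq> 0 \<and> g \<in> L1set M \<and> L1norm M g \<noteq> 0 \<longrightarrow>
        (SUP f\<in>L1ball M. L1norm M (\<lambda>x. f x + \<phi> f * g x))
          = 1 + L1_dual_norm M \<phi> * L1norm M g)"

definition L1_slice :: "'a measure \<Rightarrow> (('a \<Rightarrow> real) \<Rightarrow> real) \<Rightarrow> real \<Rightarrow> ('a \<Rightarrow> real) set" where
  "L1_slice M \<phi> \<delta> = {w \<in> L1ball M. \<phi> w > L1_dual_norm M \<phi> - \<delta>}"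

definition is_L1_slice :: "'a measure \<Rightarrow> ('a \<Rightarrow> real) set \<Rightarrow> bool" where
  "is_L1_slice M S \<longleftrightarrow> S \<noteq> {} \<and> (\<exists>\<phi> \<delta>. L1_functional M \<phi> \<and> \<delta> > 0 \<and> S = L1_slice M \<phi> \<delta>)"

definition is_L1_ccs :: "'a measure \<Rightarrow> ('a \<Rightarrow> real) set \<Rightarrow> bool" where
  "is_L1_ccs M C \<longleftrightarrow>
     (\<exists>n::nat. \<exists>lam::nat \<Rightarrow> real. \<exists>S::nat \<Rightarrow> ('a \<Rightarrow> real) set.
        n \<ge> 1 \<and> (\<forall>i<n. 0 < lam i \<and> lam i \<le> 1 \<and> is_L1_slice M (S i)) \<and>
        (\<Sum>i<n. lam i) = 1 \<and>
        C = {(\<lambda>x. \<Sum>i<n. lam i * w i x) | w. \<forall>i<n. w i \<in> S i})"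

definition L1_ccs_daugavet_point :: "'a measure \<Rightarrow> ('a \<Rightarrow> real) \<Rightarrow> bool" where
  "L1_ccs_daugavet_point M z \<longleftrightarrow> z \<in> L1sphere M \<and>
     (\<forall>C. is_L1_ccs M C \<longrightarrow> (SUP w\<in>C. L1norm M (\<lambda>x. z x - w x)) = 2)"

definition L1_SD2P :: "'a measure \<Rightarrow> bool" where
  "L1_SD2P M \<longleftrightarrow>
     (\<forall>C. is_L1_ccs M C \<longrightarrow> (SUP p\<in>C \<times> C. L1norm M (\<lambda>x. fst p x - snd p x)) = 2)"

definition is_atom :: "'a measure \<Rightarrow> 'a set \<Rightarrow> bool" where
  "is_atom M A \<longleftrightarrow> A \<in> sets M \<and> 0 < emeasure M A \<and>
     (\<forall>B\<in>sets M. B \<subseteq> A \<longrightarrow> emeasure M B = 0 \<or> emeasure M (A - B) = 0)"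

end

theory Submission
  imports Defs
begin


lemma L1norm_nonneg: "0 \<le> L1norm M f"
  unfolding L1norm_def by simp

lemma L1norm_scale: "L1norm M (\<lambda>x. c * f x) = \<bar>c\<bar> * L1norm M f"
  unfolding L1norm_def by (simp add: abs_mult)

lemma L1set_add: "f \<in> L1set M \<Longrightarrow> g \<in> L1set M \<Longrightarrow> (\<lambda>x. f x + g x) \<in> L1set M"
  unfolding L1set_def by auto
lemma L1set_diff: "f \<in> L1set M \<Longrightarrow> g \<in> L1set M \<Longrightarrow> (\<lambda>x. f x - g x) \<in> L1set M"
  unfolding L1set_def by auto
lemma L1set_scale: "f \<in> L1set M \<Longrightarrow> (\<lambda>x. c * f x) \<in> L1set M"
  unfolding L1set_def by auto

lemma func_add: "L1_functional M \<phi> \<Longrightarrow> f \<in> L1set M \<Longrightarrow> g \<in> L1set M \<Longrightarrow> \<phi> (\<lambda>x. f x + g x) = \<phi> f + \<phi> g"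
  unfolding L1_functional_def by blast
lemma func_scale: "L1_functional M \<phi> \<Longrightarrow> f \<in> L1set M \<Longrightarrow> \<phi> (\<lambda>x. c * f x) = c * \<phi> f"
  unfolding L1_functional_def by blast
lemma func_bound: assumes "L1_functional M \<phi>" obtains C where "C \<ge> 0" "\<And>f. f \<in> L1set M \<Longrightarrow> \<bar>\<phi> f\<bar> \<le> C * L1norm M f"
proof -
  obtain C where C: "\<forall>f\<in>L1set M. \<bar>\<phi> f\<bar> \<le> C * L1norm M f" using assms unfolding L1_functional_def by blast
  have "\<bar>\<phi> f\<bar> \<le> max C 0 * L1norm M f" if "f \<in> L1set M" for f
  proof -
    have "C * L1norm M f \<le> max C 0 * L1norm M f" by (rule mult_right_mono) (auto simp: L1norm_nonneg)
    with C that show ?thesis by fastforce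
  qed
  then show ?thesis using that[of "max C 0"] by auto
qed

lemma func_diff: assumes "L1_functional M \<phi>" "f \<in> L1set M" "g \<in> L1set M"
  shows "\<phi> (\<lambda>x. f x - g x) = \<phi> f - \<phi> g"
proof -
  have "\<phi> (\<lambda>x. f x - g x) = \<phi> (\<lambda>x. f x + (-1) * g x)" by simp
  also have "\<dots> = \<phi> f + \<phi> (\<lambda>x. (-1) * g x)" using assms by (intro func_add L1set_scale)
  also have "\<dots> = \<phi> f - \<phi> g" using assms func_scale[of M \<phi> g "-1"] by simp
  finally show ?thesis .
qed

lemma func_norm0: assumes "L1_functional M \<phi>" "f \<in> L1set M" "L1norm M f = 0" shows "\<phi> f = 0"
proof -
  obtain C where "C \<ge> 0" "\<And>f. f \<in> L1set M \<Longrightarrow> \<bar>\<phi> f\<bar> \<le> C * L1norm M f" using func_bound[OF assms(1)] by blast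
  from this(2)[OF assms(2)] assms(3) show ?thesis by simp
qed

lemma func_cong: assumes "L1_functional M \<phi>" "f \<in> L1set M" "g \<in> L1set M" "L1norm M (\<lambda>x. f x - g x) = 0"
  shows "\<phi> f = \<phi> g"
  using func_norm0[OF assms(1) L1set_diff[OF assms(2,3)] assms(4)] func_diff[OF assms(1-3)] by simp

lemma zero_in_ball: "(\<lambda>x. 0) \<in> L1ball M"
  unfolding L1ball_def L1set_def L1norm_def by simp

lemma dn_bdd: assumes "L1_functional M \<phi>" shows "bdd_above ((\<lambda>f. \<bar>\<phi> f\<bar>) ` L1ball M)"
proof -
  obtain C where C: "C \<ge> 0" "\<And>f. f \<in> L1set M \<Longrightarrow> \<bar>\<phi> f\<bar> \<le> C * L1norm M f" using func_bound[OF assms(1)] by blast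
  have "\<bar>\<phi> f\<bar> \<le> C" if "f \<in> L1ball M" for f
  proof -
    have "\<bar>\<phi> f\<bar> \<le> C * L1norm M f" using C(2) that unfolding L1ball_def by auto
    also have "\<dots> \<le> C * 1" using that C(1) unfolding L1ball_def by (intro mult_left_mono) auto
    finally show ?thesis by simp
  qed
  then show ?thesis by (meson bdd_aboveI2)
qed

lemma dn_upper: "L1_functional M \<phi> \<Longrightarrow> f \<in> L1ball M \<Longrightarrow> \<bar>\<phi> f\<bar> \<le> L1_dual_norm M \<phi>"
  unfolding L1_dual_norm_def by (rule cSUP_upper) (auto intro: dn_bdd)

lemma dn_nonneg: "L1_functional M \<phi> \<Longrightarrow> 0 \<le> L1_dual_norm M \<phi>"
  using dn_upper[OF _ zero_in_ball] by (meson abs_ge_zero order_trans)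

lemma dn_bound: assumes "L1_functional M \<phi>" "f \<in> L1set M"
  shows "\<bar>\<phi> f\<bar> \<le> L1_dual_norm M \<phi> * L1norm M f"
proof (cases "L1norm M f = 0")
  case True then show ?thesis using func_norm0[OF assms] by simp
next
  case False
  then have pos: "L1norm M f > 0" using L1norm_nonneg[of M f] by simp
  let ?g = "\<lambda>x. (1 / L1norm M f) * f x"
  have n1: "L1norm M ?g = \<bar>1 / L1norm M f\<bar> * L1norm M f" by (rule L1norm_scale)
  have "?g \<in> L1ball M" using pos assms(2) L1set_scale[OF assms(2), of "1 / L1norm M f"] n1 unfolding L1ball_def
    by auto
  then have "\<bar>\<phi> ?g\<bar> \<le> L1_dual_norm M \<phi>" by (rule dn_upper[OF assms(1)])
  moreover have "\<phi> ?g = \<phi> f / L1norm M f" using func_scale[OF assms, of "1 / L1norm M f"] by (simp only:) simp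
  ultimately show ?thesis using pos by (simp add: abs_div divide_le_eq)
qed

lemma dn_approx: assumes "L1_functional M \<phi>" "t < L1_dual_norm M \<phi>"
  shows "\<exists>f\<in>L1ball M. \<phi> f > t"
proof -
  have "\<exists>f\<in>L1ball M. t < \<bar>\<phi> f\<bar>"
    using assms(2) unfolding L1_dual_norm_def
    by (subst (asm) less_cSUP_iff) (auto intro: dn_bdd[OF assms(1)] zero_in_ball)
  then obtain f where f: "f \<in> L1ball M" "t < \<bar>\<phi> f\<bar>" by blast
  show ?thesis
  proof (cases "\<phi> f \<ge> 0")
    case True then show ?thesis using f by auto
  next
    case False
    have n1: "L1norm M (\<lambda>x. (-1) * f x) = \<bar>-1\<bar> * L1norm M f" by (rule L1norm_scale)
    have "(\<lambda>x. (-1) * f x) \<in> L1ball M" using f(1) L1set_scale[of f M "-1"] n1 unfolding L1ball_def by auto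
    moreover have "\<phi> (\<lambda>x. (-1) * f x) = - \<phi> f" using func_scale[OF assms(1), of f "-1"] f(1) unfolding L1ball_def by simp
    ultimately show ?thesis using False f by (intro bexI[of _ "\<lambda>x. (-1) * f x"]) auto
  qed
qed



lemma halving_iter:
  fixes N :: "'a measure"
  assumes fm: "finite_measure N"
    and H3: "\<And>E. E \<in> sets N \<Longrightarrow> measure N E > 0 \<Longrightarrow>
               \<exists>F\<in>sets N. F \<subseteq> E \<and> 0 < measure N F \<and> measure N F \<le> measure N E / 2"
  shows "E \<in> sets N \<Longrightarrow> measure N E > 0 \<Longrightarrow>
          \<exists>F\<in>sets N. F \<subseteq> E \<and> 0 < measure N F \<and> measure N F \<le> measure N E / 2 ^ k"
proof (induction k arbitrary: E)
  case 0 then show ?case by auto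
next
  case (Suc k)
  obtain F where F: "F \<in> sets N" "F \<subseteq> E" "0 < measure N F" "measure N F \<le> measure N E / 2 ^ k"
    using Suc by blast
  obtain F' where F': "F' \<in> sets N" "F' \<subseteq> F" "0 < measure N F'" "measure N F' \<le> measure N F / 2"
    using H3[OF F(1,3)] by blast
  have a: "(2 * measure N F') * 2 ^ k \<le> measure N F * 2 ^ k"
    using F'(4) by (intro mult_right_mono) auto
  have b: "measure N F * 2 ^ k \<le> measure N E" using F(4) by (simp add: field_simps)
  have c: "2 * (measure N F' * 2 ^ k) \<le> measure N E" using a b by (simp only: mult.assoc)
  have "measure N F' \<le> measure N E / 2 ^ Suc k" using c by (simp add: field_simps)
  then show ?case using F F' by blast
qed

lemma small_subset:
  fixes N :: "'a measure"
  assumes fm: "finite_measure N"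
    and H3: "\<And>E. E \<in> sets N \<Longrightarrow> measure N E > 0 \<Longrightarrow>
               \<exists>F\<in>sets N. F \<subseteq> E \<and> 0 < measure N F \<and> measure N F \<le> measure N E / 2"
    and E: "E \<in> sets N" "measure N E > 0" and eps: "\<epsilon> > 0"
  shows "\<exists>F\<in>sets N. F \<subseteq> E \<and> 0 < measure N F \<and> measure N F \<le> \<epsilon>"
proof -
  obtain k where k: "(1/2::real) ^ k < \<epsilon> / measure N E"
    using real_arch_pow_inv[of "\<epsilon> / measure N E" "1/2"] eps E by auto
  obtain F where F: "F \<in> sets N" "F \<subseteq> E" "0 < measure N F" "measure N F \<le> measure N E / 2 ^ k"
    using halving_iter[OF fm H3 E] by blast
  have "measure N E / 2 ^ k = measure N E * (1/2)^k" by (simp add: field_simps)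
  also have "\<dots> \<le> measure N E * (\<epsilon> / measure N E)" using k E by (intro mult_left_mono) auto
  also have "\<dots> = \<epsilon>" using E by simp
  finally show ?thesis using F by auto
qed

lemma split_abstract:
  fixes N :: "'a measure" and \<psi> :: "'a set \<Rightarrow> real"
  assumes fm: "finite_measure N" and K: "K \<ge> 0"
    and H1: "\<And>E F. E \<in> sets N \<Longrightarrow> F \<in> sets N \<Longrightarrow> E \<inter> F = {} \<Longrightarrow> \<psi> (E \<union> F) = \<psi> E + \<psi> F"
    and H2: "\<And>E. E \<in> sets N \<Longrightarrow> \<bar>\<psi> E\<bar> \<le> K * measure N E"
    and H3: "\<And>E. E \<in> sets N \<Longrightarrow> measure N E > 0 \<Longrightarrow>
               \<exists>F\<in>sets N. F \<subseteq> E \<and> 0 < measure N F \<and> measure N F \<le> measure N E / 2"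
    and D: "D \<in> sets N" "\<psi> D > 0" and eps: "\<epsilon> > 0"
  shows "\<exists>E\<in>sets N. E \<subseteq> D \<and> \<psi> E > 0 \<and> measure N E \<le> \<epsilon>"
proof (rule ccontr)
  assume contra: "\<not> ?thesis"
  interpret N: finite_measure N by (rule fm)
  let ?\<nu> = "measure N"
  define HN where "HN G \<longleftrightarrow> G \<in> sets N \<and> G \<subseteq> D \<and> (\<forall>G'\<in>sets N. G' \<subseteq> G \<longrightarrow> \<psi> G' \<le> 0)" for G
  have psi0: "\<psi> {} = 0" using H1[of "{}" "{}"] by simp
  have HN_un: "HN (A \<union> B)" if "HN A" "HN B" for A B
    unfolding HN_def
  proof (intro conjI ballI impI)
    show "A \<union> B \<in> sets N" "A \<union> B \<subseteq> D" using that unfolding HN_def by auto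
    fix G' assume G': "G' \<in> sets N" "G' \<subseteq> A \<union> B"
    have A: "A \<in> sets N" using that unfolding HN_def by auto
    have eq: "G' = (G' \<inter> A) \<union> (G' - A)" by auto
    have "\<psi> G' = \<psi> (G' \<inter> A) + \<psi> (G' - A)"
      by (subst eq, rule H1) (use G' A in auto)
    moreover have "\<psi> (G' \<inter> A) \<le> 0" using that(1) G' A unfolding HN_def by auto
    moreover have "G' - A \<in> sets N" using G' A by (intro sets.Diff)
    moreover have "\<psi> (G' - A) \<le> 0" using that(2) G' A calculation(3) unfolding HN_def by blast
    ultimately show "\<psi> G' \<le> 0" by simp
  qed
  have HN_small: "HN F" if "F \<in> sets N" "F \<subseteq> D" "?\<nu> F \<le> \<epsilon>" for F
    unfolding HN_def
  proof (intro conjI ballI impI)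
    fix G' assume G': "G' \<in> sets N" "G' \<subseteq> F"
    have "?\<nu> G' \<le> \<epsilon>" using N.finite_measure_mono[OF G'(2) that(1)] that(3) by simp
    then show "\<psi> G' \<le> 0" using contra G' that by force
  qed (use that in auto)
  have HN0: "HN {}" unfolding HN_def using psi0 by auto
  define T where "T = Sup (?\<nu> ` Collect HN)"
  have bdd: "bdd_above (?\<nu> ` Collect HN)"
    by (rule bdd_aboveI2[where M = "?\<nu> (space N)"]) (simp add: N.bounded_measure)
  have ne: "?\<nu> ` Collect HN \<noteq> {}" using HN0 by auto
  have T_upper: "?\<nu> G \<le> T" if "HN G" for G
    unfolding T_def using that by (intro cSup_upper bdd) auto
  have "\<forall>n::nat. \<exists>G. HN G \<and> T - 1 / (real n + 1) < ?\<nu> G"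
  proof
    fix n :: nat
    have "T - 1 / (real n + 1) < T" by simp
    then show "\<exists>G. HN G \<and> T - 1 / (real n + 1) < ?\<nu> G"
      unfolding T_def by (subst (asm) less_cSup_iff[OF ne bdd]) auto
  qed
  then obtain G where G: "\<And>n. HN (G n)" "\<And>n. T - 1 / (real n + 1) < ?\<nu> (G n)" by metis
  define U where "U n = (\<Union>i\<le>n. G i)" for n
  have HNU: "HN (U n)" for n
  proof (induction n)
    case 0 then show ?case using G(1)[of 0] unfolding U_def by simp
  next
    case (Suc n)
    have "U (Suc n) = U n \<union> G (Suc n)" unfolding U_def by (auto simp: atMost_Suc)
    then show ?case using HN_un[OF Suc G(1)] by simp
  qed
  have Usets: "range U \<subseteq> sets N" using HNU unfolding HN_def by auto
  have Uinc: "incseq U" unfolding U_def incseq_def by (auto, metis atMost_iff le_trans)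
  define V where "V = (\<Union>n. U n)"
  have Vsets: "V \<in> sets N" unfolding V_def using Usets by auto
  have VD: "V \<subseteq> D" unfolding V_def using HNU unfolding HN_def by auto
  have lim: "(\<lambda>n. ?\<nu> (U n)) \<longlonglongrightarrow> ?\<nu> V"
    unfolding V_def by (rule N.finite_Lim_measure_incseq[OF Usets Uinc])
  have UV: "U n \<subseteq> V" for n unfolding V_def by auto
  have HNV: "HN V"
    unfolding HN_def
  proof (intro conjI ballI impI Vsets VD)
    fix G' assume G': "G' \<in> sets N" "G' \<subseteq> V"
    show "\<psi> G' \<le> 0"
    proof (rule ccontr)
      assume pos: "\<not> \<psi> G' \<le> 0"
      define \<eta> where "\<eta> = \<psi> G' / (2 * (K + 1))"
      have eta: "\<eta> > 0" using pos K unfolding \<eta>_def by simp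
      obtain n where n: "\<bar>?\<nu> (U n) - ?\<nu> V\<bar> < \<eta>"
        using lim eta unfolding LIMSEQ_def dist_real_def by blast
      have Un: "U n \<in> sets N" using Usets by auto
      have eq: "G' = (G' \<inter> U n) \<union> (G' - U n)" by auto
      have "\<psi> G' = \<psi> (G' \<inter> U n) + \<psi> (G' - U n)"
        by (subst eq, rule H1) (use G' Un in auto)
      moreover have "\<psi> (G' \<inter> U n) \<le> 0" using HNU[of n] G' Un unfolding HN_def by auto
      moreover have "\<psi> (G' - U n) \<le> K * ?\<nu> (G' - U n)" using H2[of "G' - U n"] G' Un by auto
      moreover have "?\<nu> (G' - U n) \<le> ?\<nu> (V - U n)"
        using G' Un Vsets by (intro N.finite_measure_mono) auto
      moreover have "?\<nu> (V - U n) = ?\<nu> V - ?\<nu> (U n)"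
        using UV Un Vsets by (intro N.finite_measure_Diff) auto
      ultimately have "\<psi> G' \<le> K * \<eta>"
        using n K by (smt (verit, best) mult_left_mono)
      also have "\<dots> < \<psi> G'" using pos K unfolding \<eta>_def
        by (simp add: field_simps) (smt (verit) mult_nonneg_nonneg)
      finally show False by simp
    qed
  qed
  have "?\<nu> V \<ge> T"
  proof (rule ccontr)
    assume "\<not> ?\<nu> V \<ge> T"
    then obtain n :: nat where n: "1 / (real n + 1) < T - ?\<nu> V"
      by (metis diff_gt_0_iff_gt not_le nat_approx_posE of_nat_Suc add.commute)
    have "?\<nu> (G n) \<le> ?\<nu> V"
      using G(1)[of n] Vsets unfolding V_def U_def HN_def by (intro N.finite_measure_mono) auto
    then show False using G(2)[of n] n by simp
  qed
  have "?\<nu> (D - V) = 0"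
  proof (rule ccontr)
    assume "?\<nu> (D - V) \<noteq> 0"
    then have "?\<nu> (D - V) > 0" using measure_nonneg[of N "D - V"] by linarith
    then obtain F where F: "F \<in> sets N" "F \<subseteq> D - V" "0 < ?\<nu> F" "?\<nu> F \<le> \<epsilon>"
      using small_subset[OF fm H3 _ _ eps, of "D - V"] D Vsets by blast
    have "HN (V \<union> F)" using HN_un[OF HNV HN_small[OF F(1) _ F(4)]] F(2) by auto
    then have "?\<nu> (V \<union> F) \<le> T" by (rule T_upper)
    moreover have "?\<nu> (V \<union> F) = ?\<nu> V + ?\<nu> F" using F Vsets by (intro N.finite_measure_Union) auto
    ultimately show False using \<open>?\<nu> V \<ge> T\<close> F(3) by simp
  qed
  then have "\<psi> (D - V) = 0" using H2[of "D - V"] D Vsets by auto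
  moreover have "\<psi> D = \<psi> V + \<psi> (D - V)"
  proof -
    have eq: "D = V \<union> (D - V)" using VD by auto
    show ?thesis by (subst eq, rule H1) (use D Vsets in auto)
  qed
  moreover have "\<psi> V \<le> 0" using HNV unfolding HN_def by auto
  ultimately show False using D(2) by simp
qed



lemma density_basic:
  fixes g :: "'a \<Rightarrow> real"
  assumes g: "integrable M g" "\<And>x. 0 \<le> g x"
  defines "N \<equiv> density M (\<lambda>x. ennreal (g x))"
  shows "finite_measure N" "sets N = sets M" "space N = space M"
    and "\<And>E. E \<in> sets M \<Longrightarrow> measure N E = (\<integral>x. g x * indicator E x \<partial>M)"
    and "\<And>E. E \<in> sets M \<Longrightarrow> emeasure N E = ennreal (\<integral>x. g x * indicator E x \<partial>M)"
proof -
  have gm: "g \<in> borel_measurable M" using g by auto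
  show sN: "sets N = sets M" and spN: "space N = space M" unfolding N_def by auto
  have em: "emeasure N E = ennreal (\<integral>x. g x * indicator E x \<partial>M)" if E: "E \<in> sets M" for E
  proof -
    have "emeasure N E = (\<integral>\<^sup>+ x. ennreal (g x) * indicator E x \<partial>M)"
      unfolding N_def using gm E by (intro emeasure_density) auto
    also have "\<dots> = (\<integral>\<^sup>+ x. ennreal (g x * indicator E x) \<partial>M)"
      by (intro nn_integral_cong) (auto split: split_indicator)
    also have "\<dots> = ennreal (\<integral>x. g x * indicator E x \<partial>M)"
    proof (rule nn_integral_eq_integral)
      show "integrable M (\<lambda>x. g x * indicator E x)"
        using integrable_mult_indicator[OF E g(1)] by (simp add: mult.commute)
    qed (use g in auto)
    finally show ?thesis .
  qed
  then show "\<And>E. E \<in> sets M \<Longrightarrow> emeasure N E = ennreal (\<integral>x. g x * indicator E x \<partial>M)" .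
  show fm: "finite_measure N"
    by (rule finite_measureI) (simp add: spN em[OF sets.top])
  show "\<And>E. E \<in> sets M \<Longrightarrow> measure N E = (\<integral>x. g x * indicator E x \<partial>M)"
  proof -
    fix E assume E: "E \<in> sets M"
    have "0 \<le> (\<integral>x. g x * indicator E x \<partial>M)" using g by (intro integral_nonneg_AE) auto
    then show "measure N E = (\<integral>x. g x * indicator E x \<partial>M)"
      using em[OF E] unfolding measure_def by simp
  qed
qed

lemma density_halving:
  fixes g :: "'a \<Rightarrow> real"
  assumes g: "integrable M g" "\<And>x. 0 \<le> g x"
    and noatom: "\<not> (\<exists>A. is_atom M A \<and> emeasure M A < \<infinity>)"
    and E: "E \<in> sets M" "measure (density M (\<lambda>x. ennreal (g x))) E > 0"
  shows "\<exists>F\<in>sets M. F \<subseteq> E \<and> 0 < measure (density M (\<lambda>x. ennreal (g x))) F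
            \<and> measure (density M (\<lambda>x. ennreal (g x))) F \<le> measure (density M (\<lambda>x. ennreal (g x))) E / 2"
proof (rule ccontr)
  assume contra: "\<not> ?thesis"
  define N where "N = density M (\<lambda>x. ennreal (g x))"
  note NB = density_basic[OF g, folded N_def]
  interpret N: finite_measure N by (rule NB(1))
  have gm[measurable]: "g \<in> borel_measurable M" using g by auto
  let ?\<nu> = "measure N"
  have Epos: "?\<nu> E > 0" using E unfolding N_def by simp
  have atomE: "?\<nu> B = 0 \<or> ?\<nu> (E - B) = 0" if B: "B \<in> sets M" "B \<subseteq> E" for B
  proof (rule ccontr)
    assume "\<not> ?thesis"
    then have p: "?\<nu> B > 0" "?\<nu> (E - B) > 0" using measure_nonneg[of N] by (auto simp: order_less_le)
    have EB: "E - B \<in> sets M" using B E by auto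
    have sum: "?\<nu> E = ?\<nu> B + ?\<nu> (E - B)"
    proof -
      have "E = B \<union> (E - B)" using B by auto
      then have "?\<nu> E = ?\<nu> (B \<union> (E - B))" by simp
      also have "\<dots> = ?\<nu> B + ?\<nu> (E - B)" using B EB NB(2) by (intro N.finite_measure_Union) auto
      finally show ?thesis .
    qed
    show False
    proof (cases "?\<nu> B \<le> ?\<nu> E / 2")
      case True then show False using contra B p unfolding N_def by blast
    next
      case False
      then have "?\<nu> (E - B) \<le> ?\<nu> E / 2" using sum by simp
      then show False using contra EB p unfolding N_def by blast
    qed
  qed
  define Ek where "Ek k = {x\<in>E. 1 / (real k + 1) < g x}" for k :: nat
  have Ek_sets: "Ek k \<in> sets M" for k
  proof -
    have "Ek k = E \<inter> {x\<in>space M. 1 / (real k + 1) < g x}" unfolding Ek_def using sets.sets_into_space[OF E(1)] by auto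
    then show ?thesis using E(1) by auto
  qed
  have "\<exists>k. ?\<nu> (Ek k) > 0"
  proof (rule ccontr)
    assume "\<not> ?thesis"
    then have z: "?\<nu> (Ek k) = 0" for k using measure_nonneg[of N "Ek k"] by (meson not_less order.antisym)
    have "?\<nu> (\<Union>k. Ek k) = 0"
      using Ek_sets NB(2) z by (intro N.measure_countably_zero) auto
    moreover have "?\<nu> (E - (\<Union>k. Ek k)) = 0"
    proof -
      have s: "E - (\<Union>k. Ek k) \<in> sets M" using E Ek_sets by auto
      have "(\<lambda>x. g x * indicator (E - (\<Union>k. Ek k)) x) = (\<lambda>x. 0)"
      proof (rule ext)
        fix x
        show "g x * indicator (E - (\<Union>k. Ek k)) x = 0"
        proof (cases "x \<in> E - (\<Union>k. Ek k)")
          case True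
          then have "\<forall>k::nat. g x \<le> 1 / (real k + 1)" unfolding Ek_def by (auto simp: not_less)
          have "g x \<le> 0"
          proof (rule ccontr)
            assume "\<not> g x \<le> 0"
            then obtain n where n: "inverse (real (Suc n)) < g x" using reals_Archimedean[of "g x"] by auto
            have "inverse (real (Suc n)) = 1 / (real n + 1)" by (simp add: inverse_eq_divide)
            then show False using n \<open>\<forall>k::nat. g x \<le> 1 / (real k + 1)\<close>[rule_format, of n] by simp
          qed
          then show ?thesis using g(2)[of x] by simp
        qed simp
      qed
      then show ?thesis using NB(4)[OF s] by simp
    qed
    moreover have "?\<nu> E = ?\<nu> (\<Union>k. Ek k) + ?\<nu> (E - (\<Union>k. Ek k))"
    proof -
      have U: "(\<Union>k. Ek k) \<in> sets M" using Ek_sets by auto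
      have "E = (\<Union>k. Ek k) \<union> (E - (\<Union>k. Ek k))" unfolding Ek_def by auto
      then have "?\<nu> E = ?\<nu> ((\<Union>k. Ek k) \<union> (E - (\<Union>k. Ek k)))" by simp
      also have "\<dots> = ?\<nu> (\<Union>k. Ek k) + ?\<nu> (E - (\<Union>k. Ek k))"
        using U E NB(2) by (intro N.finite_measure_Union) auto
      finally show ?thesis .
    qed
    ultimately show False using Epos by simp
  qed
  then obtain k where k: "?\<nu> (Ek k) > 0" by blast
  define A where "A = Ek k"
  have A: "A \<in> sets M" "A \<subseteq> E" unfolding A_def using Ek_sets unfolding Ek_def by auto
  have keyineq: "emeasure M B \<le> ennreal (real k + 1) * ennreal (?\<nu> B)" if B: "B \<in> sets M" "B \<subseteq> A" for B
  proof -
    have "emeasure M B = (\<integral>\<^sup>+ x. indicator B x \<partial>M)" using B by simp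
    also have "\<dots> \<le> (\<integral>\<^sup>+ x. ennreal (real k + 1) * (ennreal (g x) * indicator B x) \<partial>M)"
    proof (rule nn_integral_mono)
      fix x
      show "indicator B x \<le> ennreal (real k + 1) * (ennreal (g x) * indicator B x)"
      proof (cases "x \<in> B")
        case True
        then have "1 / (real k + 1) < g x" using B A_def unfolding Ek_def by auto
        then have "1 \<le> (real k + 1) * g x" by (simp add: field_simps)
        then have "ennreal 1 \<le> ennreal ((real k + 1) * g x)" by (rule ennreal_leI)
        then show ?thesis using True g(2)[of x] by (simp add: ennreal_mult)
      qed simp
    qed
    also have "\<dots> = ennreal (real k + 1) * (\<integral>\<^sup>+ x. ennreal (g x) * indicator B x \<partial>M)"
      using B by (intro nn_integral_cmult) auto
    also have "(\<integral>\<^sup>+ x. ennreal (g x) * indicator B x \<partial>M) = emeasure N B"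
      unfolding N_def using B by (intro emeasure_density[symmetric]) auto
    also have "emeasure N B = ennreal (?\<nu> B)" using B NB(2) by (intro N.emeasure_eq_measure)
    finally show ?thesis .
  qed
  have "is_atom M A \<and> emeasure M A < \<infinity>"
    unfolding is_atom_def
  proof (intro conjI ballI impI)
    show "A \<in> sets M" by (rule A(1))
    show "emeasure M A < \<infinity>" using keyineq[OF A(1) order_refl]
      by (metis ennreal_mult_less_top ennreal_less_top infinity_ennreal_def order.strict_trans1)
    show "0 < emeasure M A"
    proof (rule ccontr)
      assume "\<not> 0 < emeasure M A"
      then have "A \<in> null_sets M" using A by (auto simp: null_sets_def)
      then have "(\<integral>\<^sup>+ x. ennreal (g x) * indicator A x \<partial>M) = 0" by (rule nn_integral_null_set)
      moreover have "(\<integral>\<^sup>+ x. ennreal (g x) * indicator A x \<partial>M) = emeasure N A"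
        unfolding N_def using A by (intro emeasure_density[symmetric]) auto
      moreover have "emeasure N A = ennreal (?\<nu> A)" using A NB(2) by (intro N.emeasure_eq_measure)
      ultimately show False using k A_def by simp
    qed
    fix B assume B: "B \<in> sets M" "B \<subseteq> A"
    have "?\<nu> B = 0 \<or> ?\<nu> (E - B) = 0" using atomE B A by blast
    then show "emeasure M B = 0 \<or> emeasure M (A - B) = 0"
    proof
      assume "?\<nu> B = 0" then show ?thesis using keyineq[OF B] by simp
    next
      assume h: "?\<nu> (E - B) = 0"
      have AB: "A - B \<in> sets M" using A B by auto
      have "?\<nu> (A - B) \<le> ?\<nu> (E - B)" using A B E NB(2) by (intro N.finite_measure_mono) auto
      then have "?\<nu> (A - B) = 0" using h measure_nonneg[of N "A - B"] by simp
      then show ?thesis using keyineq[OF AB] by simp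
    qed
  qed
  then show False using noatom by blast
qed



lemma restr_L1set: fixes w :: "'a \<Rightarrow> real" shows "w \<in> L1set M \<Longrightarrow> E \<in> sets M \<Longrightarrow> (\<lambda>x. indicator E x * w x) \<in> L1set M"
  unfolding L1set_def using integrable_mult_indicator[of E M w] by simp

lemma restr_norm: fixes w :: "'a \<Rightarrow> real" shows "L1norm M (\<lambda>x. indicator E x * w x) = (\<integral>x. indicator E x * \<bar>w x\<bar> \<partial>M)"
  unfolding L1norm_def by (simp add: abs_mult)

lemma restr_int: fixes w :: "'a \<Rightarrow> real" shows "w \<in> L1set M \<Longrightarrow> E \<in> sets M \<Longrightarrow> integrable M (\<lambda>x. indicator E x * \<bar>w x\<bar>)"
  unfolding L1set_def using integrable_mult_indicator[of E M "\<lambda>x. \<bar>w x\<bar>"] by simp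

lemma restr_space_norm: fixes w :: "'a \<Rightarrow> real" shows "(\<integral>x. indicator (space M) x * \<bar>w x\<bar> \<partial>M) = L1norm M w"
  unfolding L1norm_def by (rule Bochner_Integration.integral_cong) auto

lemma restr_space_diff: fixes w :: "'a \<Rightarrow> real" shows "L1norm M (\<lambda>x. indicator (space M) x * w x - w x) = 0"
  unfolding L1norm_def by (subst Bochner_Integration.integral_cong[where g="\<lambda>x. 0"]) auto

lemma restr_nonneg: fixes w :: "'a \<Rightarrow> real" shows "0 \<le> (\<integral>x. indicator E x * \<bar>w x\<bar> \<partial>M)"
  by (rule Bochner_Integration.integral_nonneg_AE) (simp add: indicator_def)

lemma restr_add:
  fixes w :: "'a \<Rightarrow> real"
  assumes "w \<in> L1set M" "E \<in> sets M" "F \<in> sets M" "E \<inter> F = {}"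
  shows "(\<integral>x. indicator (E \<union> F) x * \<bar>w x\<bar> \<partial>M) =
         (\<integral>x. indicator E x * \<bar>w x\<bar> \<partial>M) + (\<integral>x. indicator F x * \<bar>w x\<bar> \<partial>M)"
proof -
  have "(\<lambda>x. indicator (E \<union> F) x * \<bar>w x\<bar>) = (\<lambda>x. indicator E x * \<bar>w x\<bar> + indicator F x * \<bar>w x\<bar>)"
  proof
    fix x show "indicator (E \<union> F) x * \<bar>w x\<bar> = indicator E x * \<bar>w x\<bar> + indicator F x * \<bar>w x\<bar>"
      by (cases "x \<in> E"; cases "x \<in> F") (use assms(4) in auto)
  qed
  then show ?thesis using restr_int[OF assms(1,2)] restr_int[OF assms(1,3)] by (simp add: integral_add)
qed

lemma restr_fun_add:
  fixes w :: "'a \<Rightarrow> real"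
  assumes "E \<inter> F = {}"
  shows "(\<lambda>x. indicator (E \<union> F) x * w x) = (\<lambda>x. indicator E x * w x + indicator F x * w x)"
proof
  fix x show "indicator (E \<union> F) x * w x = indicator E x * w x + indicator F x * w x"
    by (cases "x \<in> E"; cases "x \<in> F") (use assms in auto)
qed

lemma make_v:
  fixes w :: "'a \<Rightarrow> real"
  assumes w: "w \<in> L1set M" and E: "E \<in> sets M" and r: "(\<integral>x. indicator E x * \<bar>w x\<bar> \<partial>M) > 0"
  defines "v \<equiv> (\<lambda>x. (1 / (\<integral>x. indicator E x * \<bar>w x\<bar> \<partial>M)) * (indicator E x * w x))"
  shows "v \<in> L1set M" "L1norm M v = 1" "\<And>x. x \<notin> E \<Longrightarrow> v x = 0" "v \<in> L1ball M"
    and "\<And>\<phi>. L1_functional M \<phi> \<Longrightarrow> \<phi> v = \<phi> (\<lambda>x. indicator E x * w x) / (\<integral>x. indicator E x * \<bar>w x\<bar> \<partial>M)"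
proof -
  let ?r = "\<integral>x. indicator E x * \<bar>w x\<bar> \<partial>M"
  show v1: "v \<in> L1set M" unfolding v_def by (intro L1set_scale restr_L1set w E)
  have "L1norm M v = \<bar>1 / ?r\<bar> * L1norm M (\<lambda>x. indicator E x * w x)"
    unfolding v_def by (rule L1norm_scale)
  then show v2: "L1norm M v = 1" using r by (simp add: restr_norm)
  show "\<And>x. x \<notin> E \<Longrightarrow> v x = 0" unfolding v_def by simp
  show "v \<in> L1ball M" using v1 v2 unfolding L1ball_def by simp
  fix \<phi> assume "L1_functional M \<phi>"
  then show "\<phi> v = \<phi> (\<lambda>x. indicator E x * w x) / ?r"
    unfolding v_def using func_scale[of M \<phi> "\<lambda>x. indicator E x * w x" "1 / ?r"] restr_L1set[OF w E] by simp
qed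

lemma slice_data:
  assumes S: "is_L1_slice M S" and nz: "\<exists>w0\<in>L1set M. L1norm M w0 > 0"
  shows "\<exists>w0 \<psi> K. w0 \<in> L1set M \<and> K \<ge> 0 \<and> \<psi> (space M) > 0
     \<and> (\<forall>E\<in>sets M. \<forall>F\<in>sets M. E \<inter> F = {} \<longrightarrow> \<psi> (E \<union> F) = \<psi> E + \<psi> F)
     \<and> (\<forall>E\<in>sets M. \<bar>\<psi> E\<bar> \<le> K * (\<integral>x. indicator E x * \<bar>w0 x\<bar> \<partial>M))
     \<and> (\<forall>E\<in>sets M. \<psi> E > 0 \<longrightarrow> (\<exists>v\<in>S. v \<in> L1set M \<and> L1norm M v = 1 \<and> (\<forall>x. x \<notin> E \<longrightarrow> v x = 0)))"
proof -
  obtain \<phi> \<delta> where \<phi>: "L1_functional M \<phi>" and d: "\<delta> > 0" and Sdef: "S = L1_slice M \<phi> \<delta>"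
    using S unfolding is_L1_slice_def by blast
  obtain C where C: "C \<ge> 0" "\<And>f. f \<in> L1set M \<Longrightarrow> \<bar>\<phi> f\<bar> \<le> C * L1norm M f" using func_bound[OF \<phi>] by blast
  let ?n = "L1_dual_norm M \<phi>"
  show ?thesis
  proof (cases "?n > 0")
    case True
    define a where "a = max (?n - \<delta>) 0"
    have a: "a \<ge> 0" "a < ?n" "a \<ge> ?n - \<delta>" using True d unfolding a_def by auto
    obtain w0 where w0: "w0 \<in> L1ball M" "\<phi> w0 > a" using dn_approx[OF \<phi> a(2)] by blast
    have w0L: "w0 \<in> L1set M" "L1norm M w0 \<le> 1" using w0 unfolding L1ball_def by auto
    define r where "r E = (\<integral>x. indicator E x * \<bar>w0 x\<bar> \<partial>M)" for E
    define \<psi> where "\<psi> E = \<phi> (\<lambda>x. indicator E x * w0 x) - a * r E" for E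
    have r0: "r E \<ge> 0" for E unfolding r_def by (rule restr_nonneg)
    have bnd: "\<bar>\<phi> (\<lambda>x. indicator E x * w0 x)\<bar> \<le> C * r E" if "E \<in> sets M" for E
      using C(2)[OF restr_L1set[OF w0L(1) that]] unfolding r_def restr_norm .
    show ?thesis
    proof (intro exI conjI ballI impI)
      show "w0 \<in> L1set M" by (rule w0L(1))
      show "C + a \<ge> 0" using C a by simp
      have "\<phi> (\<lambda>x. indicator (space M) x * w0 x) = \<phi> w0"
        by (rule func_cong[OF \<phi> restr_L1set[OF w0L(1) sets.top] w0L(1) restr_space_diff])
      moreover have "r (space M) = L1norm M w0" unfolding r_def by (rule restr_space_norm)
      moreover have "a * L1norm M w0 \<le> a" using a w0L(2) by (simp add: mult_left_le)
      ultimately show "\<psi> (space M) > 0" unfolding \<psi>_def using w0(2) by simp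
      fix E assume E: "E \<in> sets M"
      {
        fix F assume F: "F \<in> sets M" "E \<inter> F = {}"
        show "\<psi> (E \<union> F) = \<psi> E + \<psi> F"
          unfolding \<psi>_def r_def restr_fun_add[OF F(2), of w0]
          using func_add[OF \<phi> restr_L1set[OF w0L(1) E] restr_L1set[OF w0L(1) F(1)]]
                restr_add[OF w0L(1) E F] by (simp add: algebra_simps)
      }
      show "\<bar>\<psi> E\<bar> \<le> (C + a) * (\<integral>x. indicator E x * \<bar>w0 x\<bar> \<partial>M)"
        using bnd[OF E] r0[of E] a(1) unfolding \<psi>_def r_def[symmetric] by (simp add: algebra_simps abs_le_iff) (smt (verit) mult_nonneg_nonneg)
      assume pos: "\<psi> E > 0"
      have rpos: "r E > 0"
      proof (rule ccontr)
        assume "\<not> r E > 0" then have "r E = 0" using r0[of E] by simp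
        then show False using bnd[OF E] pos unfolding \<psi>_def by simp
      qed
      note V = make_v[OF w0L(1) E rpos[unfolded r_def]]
      let ?v = "\<lambda>x. (1 / (\<integral>x. indicator E x * \<bar>w0 x\<bar> \<partial>M)) * (indicator E x * w0 x)"
      have e1: "\<phi> ?v = \<phi> (\<lambda>x. indicator E x * w0 x) / r E" unfolding r_def by (rule V(5)[OF \<phi>])
      have "a < \<phi> (\<lambda>x. indicator E x * w0 x) / r E" using pos rpos unfolding \<psi>_def by (simp add: pos_less_divide_eq)
      then have "\<phi> ?v > a" using e1 by simp
      then have "?v \<in> S" using V(4) a(3) unfolding Sdef L1_slice_def by auto
      then show "\<exists>v\<in>S. v \<in> L1set M \<and> L1norm M v = 1 \<and> (\<forall>x. x \<notin> E \<longrightarrow> v x = 0)"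
        using V(1-3) by blast
    qed
  next
    case False
    then have n0: "?n = 0" using dn_nonneg[OF \<phi>] by simp
    obtain w0 where w0: "w0 \<in> L1set M" "L1norm M w0 > 0" using nz by blast
    define \<psi> where "\<psi> E = (\<integral>x. indicator E x * \<bar>w0 x\<bar> \<partial>M)" for E
    show ?thesis
    proof (intro exI conjI ballI impI)
      show "w0 \<in> L1set M" by (rule w0(1))
      show "(1::real) \<ge> 0" by simp
      show "\<psi> (space M) > 0" unfolding \<psi>_def restr_space_norm by (rule w0(2))
      fix E assume E: "E \<in> sets M"
      {
        fix F assume F: "F \<in> sets M" "E \<inter> F = {}"
        show "\<psi> (E \<union> F) = \<psi> E + \<psi> F" unfolding \<psi>_def by (rule restr_add[OF w0(1) E F])
      }
      show "\<bar>\<psi> E\<bar> \<le> 1 * (\<integral>x. indicator E x * \<bar>w0 x\<bar> \<partial>M)" unfolding \<psi>_def using restr_nonneg by simp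
      assume pos: "\<psi> E > 0"
      note V = make_v[OF w0(1) E pos[unfolded \<psi>_def]]
      let ?v = "\<lambda>x. (1 / (\<integral>x. indicator E x * \<bar>w0 x\<bar> \<partial>M)) * (indicator E x * w0 x)"
      have "\<bar>\<phi> ?v\<bar> \<le> ?n * L1norm M ?v" by (rule dn_bound[OF \<phi> V(1)])
      then have "\<phi> ?v = 0" using n0 by simp
      then have "?v \<in> S" using V(4) d n0 unfolding Sdef L1_slice_def by auto
      then show "\<exists>v\<in>S. v \<in> L1set M \<and> L1norm M v = 1 \<and> (\<forall>x. x \<notin> E \<longrightarrow> v x = 0)"
        using V(1-3) by blast
    qed
  qed
qed



lemma pos_lower_bound:
  fixes c :: "nat \<Rightarrow> real"
  assumes "\<And>i. i < n \<Longrightarrow> c i > 0"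
  shows "\<exists>e>0. \<forall>i<n. e \<le> c i"
  using assms
proof (induction n)
  case 0 then show ?case by (intro exI[of _ 1]) auto
next
  case (Suc n)
  then obtain e where e: "e > 0" "\<forall>i<n. e \<le> c i" by auto
  have "c n > 0" using Suc.prems by simp
  then show ?case using e by (intro exI[of _ "min e (c n)"]) (auto simp: less_Suc_eq)
qed

lemma core_select:
  fixes z :: "'a \<Rightarrow> real" and n :: nat and S :: "nat \<Rightarrow> ('a \<Rightarrow> real) set"
  assumes noatom: "\<not> (\<exists>A. is_atom M A \<and> emeasure M A < \<infinity>)"
    and nz: "\<exists>w0\<in>L1set M. L1norm M w0 > 0"
    and S: "\<forall>i<n. is_L1_slice M (S i)"
    and z: "z \<in> L1set M" and eps: "\<epsilon> > 0"
  shows "\<exists>v E. \<forall>i<n. v i \<in> S i \<and> v i \<in> L1set M \<and> L1norm M (v i) = 1 \<and> E i \<in> sets M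
     \<and> (\<forall>x. x \<notin> E i \<longrightarrow> v i x = 0) \<and> (\<integral>x. indicator (E i) x * \<bar>z x\<bar> \<partial>M) \<le> \<epsilon>
     \<and> (\<forall>j<n. j \<noteq> i \<longrightarrow> E i \<inter> E j = {})"
proof -
  define Q where "Q i w0 \<psi> K \<longleftrightarrow> w0 \<in> L1set M \<and> K \<ge> 0 \<and> \<psi> (space M) > 0
     \<and> (\<forall>E\<in>sets M. \<forall>F\<in>sets M. E \<inter> F = {} \<longrightarrow> \<psi> (E \<union> F) = \<psi> E + \<psi> F)
     \<and> (\<forall>E\<in>sets M. \<bar>\<psi> E\<bar> \<le> K * (\<integral>x. indicator E x * \<bar>w0 x\<bar> \<partial>M))
     \<and> (\<forall>E\<in>sets M. \<psi> E > 0 \<longrightarrow> (\<exists>v\<in>S i. v \<in> L1set M \<and> L1norm M v = 1 \<and> (\<forall>x. x \<notin> E \<longrightarrow> v x = 0)))"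
    for i w0 and \<psi> :: "'a set \<Rightarrow> real" and K :: real
  have ex: "\<exists>w0 \<psi> K. Q i w0 \<psi> K" if "i < n" for i
    unfolding Q_def by (rule slice_data[OF S[rule_format, OF that] nz])
  have "\<forall>i. \<exists>w0 \<psi> K. i < n \<longrightarrow> Q i w0 \<psi> K" using ex by blast
  then obtain W \<Psi> KK where "\<forall>i. i < n \<longrightarrow> Q i (W i) (\<Psi> i) (KK i)" by metis
  then have WPK: "\<forall>i<n. W i \<in> L1set M \<and> KK i \<ge> 0 \<and> \<Psi> i (space M) > 0
     \<and> (\<forall>E\<in>sets M. \<forall>F\<in>sets M. E \<inter> F = {} \<longrightarrow> \<Psi> i (E \<union> F) = \<Psi> i E + \<Psi> i F)
     \<and> (\<forall>E\<in>sets M. \<bar>\<Psi> i E\<bar> \<le> KK i * (\<integral>x. indicator E x * \<bar>W i x\<bar> \<partial>M))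
     \<and> (\<forall>E\<in>sets M. \<Psi> i E > 0 \<longrightarrow> (\<exists>v\<in>S i. v \<in> L1set M \<and> L1norm M v = 1 \<and> (\<forall>x. x \<notin> E \<longrightarrow> v x = 0)))"
    unfolding Q_def by blast
  have Wl: "\<And>i. i < n \<Longrightarrow> W i \<in> L1set M" using WPK by simp
  have K0: "\<And>i. i < n \<Longrightarrow> KK i \<ge> 0" using WPK by simp
  have Pp: "\<And>i. i < n \<Longrightarrow> \<Psi> i (space M) > 0" using WPK by simp
  have Padd: "\<And>i E F. i < n \<Longrightarrow> E \<in> sets M \<Longrightarrow> F \<in> sets M \<Longrightarrow> E \<inter> F = {} \<Longrightarrow> \<Psi> i (E \<union> F) = \<Psi> i E + \<Psi> i F"
    using WPK by simp
  have Pb: "\<And>i E. i < n \<Longrightarrow> E \<in> sets M \<Longrightarrow> \<bar>\<Psi> i E\<bar> \<le> KK i * (\<integral>x. indicator E x * \<bar>W i x\<bar> \<partial>M)"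
    using WPK by simp
  have Pv: "\<And>i E. i < n \<Longrightarrow> E \<in> sets M \<Longrightarrow> \<Psi> i E > 0 \<Longrightarrow> (\<exists>v\<in>S i. v \<in> L1set M \<and> L1norm M v = 1 \<and> (\<forall>x. x \<notin> E \<longrightarrow> v x = 0))"
    using WPK by simp
  define g where "g x = \<bar>z x\<bar> + (\<Sum>i<n. \<bar>W i x\<bar>)" for x
  have gint: "integrable M g" unfolding g_def using z Wl unfolding L1set_def
    by (intro Bochner_Integration.integrable_add integrable_abs Bochner_Integration.integrable_sum) auto
  have gnn: "0 \<le> g x" for x unfolding g_def by (intro add_nonneg_nonneg sum_nonneg) auto
  define N where "N = density M (\<lambda>x. ennreal (g x))"
  note NB = density_basic[OF gint gnn, folded N_def]
  interpret N: finite_measure N by (rule NB(1))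
  let ?\<nu> = "measure N"
  have dom: "(\<integral>x. indicator E x * \<bar>h x\<bar> \<partial>M) \<le> ?\<nu> E"
    if E: "E \<in> sets M" and h: "h \<in> L1set M" and hg: "\<And>x. \<bar>h x\<bar> \<le> g x" for E h
  proof -
    have "(\<integral>x. indicator E x * \<bar>h x\<bar> \<partial>M) \<le> (\<integral>x. g x * indicator E x \<partial>M)"
    proof (rule integral_mono)
      show "integrable M (\<lambda>x. indicator E x * \<bar>h x\<bar>)" by (rule restr_int[OF h E])
      show "integrable M (\<lambda>x. g x * indicator E x)" using integrable_mult_indicator[OF E gint] by (simp add: mult.commute)
      fix x show "indicator E x * \<bar>h x\<bar> \<le> g x * indicator E x" using hg[of x] by (auto simp: indicator_def)
    qed
    then show ?thesis using NB(4)[OF E] by simp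
  qed
  have domW: "(\<integral>x. indicator E x * \<bar>W i x\<bar> \<partial>M) \<le> ?\<nu> E" if "E \<in> sets M" "i < n" for E i
  proof (rule dom[OF that(1)])
    show "W i \<in> L1set M" using Wl that by blast
    fix x
    have "\<bar>W i x\<bar> \<le> (\<Sum>j<n. \<bar>W j x\<bar>)" using that(2) by (intro member_le_sum[of i "{..<n}"]) auto
    then show "\<bar>W i x\<bar> \<le> g x" unfolding g_def by simp
  qed
  have domz: "(\<integral>x. indicator E x * \<bar>z x\<bar> \<partial>M) \<le> ?\<nu> E" if "E \<in> sets M" for E
  proof (rule dom[OF that z])
    fix x
    have "0 \<le> (\<Sum>j<n. \<bar>W j x\<bar>)" by (intro sum_nonneg) auto
    then show "\<bar>z x\<bar> \<le> g x" unfolding g_def by simp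
  qed
  have psiB: "\<bar>\<Psi> i E\<bar> \<le> KK i * ?\<nu> E" if "E \<in> sets M" "i < n" for E i
  proof -
    have "\<bar>\<Psi> i E\<bar> \<le> KK i * (\<integral>x. indicator E x * \<bar>W i x\<bar> \<partial>M)" using Pb that by blast
    also have "\<dots> \<le> KK i * ?\<nu> E" using domW[OF that] K0 that by (intro mult_left_mono) auto
    finally show ?thesis .
  qed
  obtain e where e: "e > 0" "\<forall>i<n. e \<le> \<Psi> i (space M) / (real n * KK i + 1)"
  proof -
    have "0 < \<Psi> i (space M) / (real n * KK i + 1)" if "i < n" for i
      using Pp K0 that by (intro divide_pos_pos) (auto intro: add_nonneg_pos)
    then show ?thesis using that pos_lower_bound[of n "\<lambda>i. \<Psi> i (space M) / (real n * KK i + 1)"] by blast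
  qed
  define e' where "e' = min e \<epsilon>"
  have e': "e' > 0" "e' \<le> \<epsilon>" "e' \<le> e" using e eps unfolding e'_def by auto
  have margin: "real m * KK i * e' < \<Psi> i (space M)" if "i < n" "m \<le> n" for i m
  proof -
    have K0: "KK i \<ge> 0" and P0: "\<Psi> i (space M) > 0" using K0 Pp that by auto
    have "real m * KK i * e' \<le> real n * KK i * e'"
      using that K0 e' by (intro mult_right_mono mult_right_mono) auto
    also have "\<dots> \<le> real n * KK i * (\<Psi> i (space M) / (real n * KK i + 1))"
      using e(2) that e' K0 by (intro mult_left_mono) auto
    also have "\<dots> = \<Psi> i (space M) * (real n * KK i / (real n * KK i + 1))" by simp
    also have "\<dots> < \<Psi> i (space M) * 1"
    proof (rule mult_strict_left_mono[OF _ P0])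
      have "0 \<le> real n * KK i" using K0 by simp
      then show "real n * KK i / (real n * KK i + 1) < 1" by simp
    qed
    also have "\<dots> = \<Psi> i (space M)" by simp
    finally show ?thesis .
  qed
  have H3: "\<And>E. E \<in> sets N \<Longrightarrow> ?\<nu> E > 0 \<Longrightarrow>
               \<exists>F\<in>sets N. F \<subseteq> E \<and> 0 < ?\<nu> F \<and> ?\<nu> F \<le> ?\<nu> E / 2"
    using density_halving[OF gint gnn noatom] unfolding N_def[symmetric] NB(2) by blast
  have ind: "m \<le> n \<Longrightarrow> \<exists>E. \<forall>i<m. E i \<in> sets M \<and> ?\<nu> (E i) \<le> e' \<and> \<Psi> i (E i) > 0
                \<and> (\<forall>j<m. j \<noteq> i \<longrightarrow> E i \<inter> E j = {})" for m
  proof (induction m)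
    case 0 then show ?case by simp
  next
    case (Suc m)
    then obtain E where E: "\<forall>i<m. E i \<in> sets M \<and> ?\<nu> (E i) \<le> e' \<and> \<Psi> i (E i) > 0
                \<and> (\<forall>j<m. j \<noteq> i \<longrightarrow> E i \<inter> E j = {})" by auto
    have mn: "m < n" using Suc.prems by simp
    define U where "U = (\<Union>j<m. E j)"
    have U: "U \<in> sets M" unfolding U_def using E by auto
    have Usp: "U \<subseteq> space M" using U sets.sets_into_space by auto
    define D where "D = space M - U"
    have D: "D \<in> sets M" unfolding D_def using U by auto
    have nuU: "?\<nu> U \<le> real m * e'"
    proof -
      have "?\<nu> U \<le> (\<Sum>j<m. ?\<nu> (E j))"
        unfolding U_def using E NB(2) by (intro N.finite_measure_subadditive_finite) auto
      also have "\<dots> \<le> (\<Sum>j<m. e')" using E by (intro sum_mono) auto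
      finally show ?thesis by simp
    qed
    have "\<Psi> m (space M) = \<Psi> m (U \<union> D)" using Usp unfolding D_def by (simp add: Un_Diff_cancel Un_absorb1)
    also have "\<dots> = \<Psi> m U + \<Psi> m D"
    proof -
      show ?thesis by (rule Padd[OF mn U D]) (auto simp: D_def)
    qed
    finally have sp: "\<Psi> m (space M) = \<Psi> m U + \<Psi> m D" .
    have "\<bar>\<Psi> m U\<bar> \<le> KK m * ?\<nu> U" by (rule psiB[OF U mn])
    also have "\<dots> \<le> KK m * (real m * e')" using nuU K0 mn by (intro mult_left_mono) auto
    finally have "\<bar>\<Psi> m U\<bar> \<le> real m * KK m * e'" by (simp add: algebra_simps)
    moreover have "real m * KK m * e' < \<Psi> m (space M)" using margin[OF mn, of m] mn by simp
    ultimately have PD: "\<Psi> m D > 0" using sp by linarith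
    have H1: "\<And>E F. E \<in> sets N \<Longrightarrow> F \<in> sets N \<Longrightarrow> E \<inter> F = {} \<Longrightarrow> \<Psi> m (E \<union> F) = \<Psi> m E + \<Psi> m F"
      using Padd[OF mn] unfolding NB(2) .
    have H2: "\<And>E. E \<in> sets N \<Longrightarrow> \<bar>\<Psi> m E\<bar> \<le> KK m * ?\<nu> E"
      using psiB[OF _ mn] unfolding NB(2) .
    obtain E' where E': "E' \<in> sets M" "E' \<subseteq> D" "\<Psi> m E' > 0" "?\<nu> E' \<le> e'"
      using split_abstract[OF NB(1) K0[OF mn] H1 H2 H3, of D e'] D PD e'(1) unfolding NB(2) by blast
    have disj: "E' \<inter> E j = {}" if "j < m" for j using E'(2) that unfolding D_def U_def by auto
    show ?case
    proof (intro exI[of _ "E(m := E')"] allI impI conjI)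
      fix i assume i: "i < Suc m"
      show "(E(m := E')) i \<in> sets M" "?\<nu> ((E(m := E')) i) \<le> e'" "\<Psi> i ((E(m := E')) i) > 0"
        using i E E' by (auto simp: less_Suc_eq)
      fix j assume j: "j < Suc m" "j \<noteq> i"
      show "(E(m := E')) i \<inter> (E(m := E')) j = {}"
        using i j E disj by (auto simp: less_Suc_eq)
    qed
  qed
  obtain E where E: "\<forall>i<n. E i \<in> sets M \<and> ?\<nu> (E i) \<le> e' \<and> \<Psi> i (E i) > 0
                \<and> (\<forall>j<n. j \<noteq> i \<longrightarrow> E i \<inter> E j = {})" using ind[of n] by auto
  define R where "R i v \<longleftrightarrow> v \<in> S i \<and> v \<in> L1set M \<and> L1norm M v = 1 \<and> (\<forall>x. x \<notin> E i \<longrightarrow> v x = 0)" for i v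
  have "\<forall>i. \<exists>v. i < n \<longrightarrow> R i v"
    unfolding R_def using E Pv by blast
  then obtain v where "\<forall>i. i < n \<longrightarrow> R i (v i)" by metis
  then have v: "\<forall>i<n. v i \<in> S i \<and> v i \<in> L1set M \<and> L1norm M (v i) = 1 \<and> (\<forall>x. x \<notin> E i \<longrightarrow> v i x = 0)"
    unfolding R_def by blast
  have "(\<integral>x. indicator (E i) x * \<bar>z x\<bar> \<partial>M) \<le> \<epsilon>" if "i < n" for i
    using domz[of "E i"] E that e' by force
  then show ?thesis using v E by blast
qed



lemma sup_eqT:
  fixes f :: "'b \<Rightarrow> real"
  assumes ne: "C \<noteq> {}" and ub: "\<And>x. x \<in> C \<Longrightarrow> f x \<le> T"
    and approx: "\<And>e. e > 0 \<Longrightarrow> \<exists>x\<in>C. f x \<ge> T - e"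
  shows "(SUP x\<in>C. f x) = T"
proof (rule antisym)
  show "(SUP x\<in>C. f x) \<le> T" using ne ub by (intro cSUP_least) auto
  have bdd: "bdd_above (f ` C)" using ub by (meson bdd_aboveI2)
  define s where "s = (SUP x\<in>C. f x)"
  show "T \<le> (SUP x\<in>C. f x)"
  proof (rule ccontr)
    assume "\<not> T \<le> (SUP x\<in>C. f x)"
    then have lt: "s < T" unfolding s_def by simp
    obtain y where y: "y \<in> C" "f y \<ge> T - (T - s) / 2"
      using approx[of "(T - s) / 2"] lt by auto
    have "f y \<le> s" unfolding s_def using bdd y(1) by (rule cSUP_upper2) simp
    then show False using y(2) lt by (simp add: field_simps)
  qed
qed

lemma L1norm_diff_le:
  assumes "u \<in> L1set M" "v \<in> L1set M"
  shows "L1norm M (\<lambda>x. u x - v x) \<le> L1norm M u + L1norm M v"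
proof -
  have "(\<integral>x. \<bar>u x - v x\<bar> \<partial>M) \<le> (\<integral>x. \<bar>u x\<bar> + \<bar>v x\<bar> \<partial>M)"
    by (rule integral_mono) (use assms in \<open>auto simp: L1set_def\<close>)
  also have "\<dots> = (\<integral>x. \<bar>u x\<bar> \<partial>M) + (\<integral>x. \<bar>v x\<bar> \<partial>M)"
    using assms by (simp add: integral_add L1set_def)
  finally show ?thesis unfolding L1norm_def .
qed

lemma dist_lemma:
  fixes u v c :: "'a \<Rightarrow> real"
  assumes u: "u \<in> L1set M" and v: "v \<in> L1set M" and c0: "\<And>x. c x \<ge> 0"
    and ci: "integrable M (\<lambda>x. c x * \<bar>u x\<bar>)" and c1: "\<And>x. v x \<noteq> 0 \<Longrightarrow> c x \<ge> 1"
  shows "L1norm M (\<lambda>x. u x - v x) \<ge> L1norm M u + L1norm M v - 2 * (\<integral>x. c x * \<bar>u x\<bar> \<partial>M)"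
proof -
  have iu: "integrable M (\<lambda>x. \<bar>u x\<bar>)" and iv: "integrable M (\<lambda>x. \<bar>v x\<bar>)" using u v unfolding L1set_def by auto
  have pw: "\<bar>u x\<bar> + \<bar>v x\<bar> - 2 * (c x * \<bar>u x\<bar>) \<le> \<bar>u x - v x\<bar>" for x
  proof (cases "v x = 0")
    case True then show ?thesis using c0[of x] by simp
  next
    case False
    then have "c x * \<bar>u x\<bar> \<ge> 1 * \<bar>u x\<bar>" using c1 by (intro mult_right_mono) auto
    then show ?thesis by linarith
  qed
  have "(\<integral>x. \<bar>u x\<bar> + \<bar>v x\<bar> - 2 * (c x * \<bar>u x\<bar>) \<partial>M) \<le> (\<integral>x. \<bar>u x - v x\<bar> \<partial>M)"
    by (rule integral_mono) (use iu iv ci u v pw in \<open>auto simp: L1set_def\<close>)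
  moreover have "(\<integral>x. \<bar>u x\<bar> + \<bar>v x\<bar> - 2 * (c x * \<bar>u x\<bar>) \<partial>M)
      = (\<integral>x. \<bar>u x\<bar> \<partial>M) + (\<integral>x. \<bar>v x\<bar> \<partial>M) - 2 * (\<integral>x. c x * \<bar>u x\<bar> \<partial>M)"
    using iu iv ci by simp
  ultimately show ?thesis unfolding L1norm_def by simp
qed

lemma sum_single:
  fixes f :: "nat \<Rightarrow> real"
  assumes "j < n" "\<And>i. i < n \<Longrightarrow> i \<noteq> j \<Longrightarrow> f i = 0"
  shows "(\<Sum>i<n. f i) = f j"
proof -
  have "(\<Sum>i<n. f i) = f j + (\<Sum>i\<in>{..<n} - {j}. f i)" using assms(1) by (simp add: sum.remove)
  also have "(\<Sum>i\<in>{..<n} - {j}. f i) = 0" using assms(2) by (intro sum.neutral) auto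
  finally show ?thesis by simp
qed

lemma ccs_elem_ball:
  assumes C: "is_L1_ccs M C" and c: "c \<in> C"
  shows "c \<in> L1set M \<and> L1norm M c \<le> 1"
proof -
  obtain n :: nat and lam :: "nat \<Rightarrow> real" and S :: "nat \<Rightarrow> ('a \<Rightarrow> real) set" where
    n: "n \<ge> 1" and L: "\<forall>i<n. 0 < lam i \<and> lam i \<le> 1 \<and> is_L1_slice M (S i)"
    and sl: "(\<Sum>i<n. lam i) = 1" and Cd: "C = {(\<lambda>x. \<Sum>i<n. lam i * w i x) | w. \<forall>i<n. w i \<in> S i}"
    using C unfolding is_L1_ccs_def by blast
  obtain w where w: "\<forall>i<n. w i \<in> S i" and cw: "c = (\<lambda>x. \<Sum>i<n. lam i * w i x)" using c Cd by blast
  have wb: "w i \<in> L1ball M" if "i < n" for i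
    using w L that unfolding is_L1_slice_def L1_slice_def by auto
  have wi: "integrable M (w i)" if "i < n" for i using wb[OF that] unfolding L1ball_def L1set_def by auto
  have ci: "c \<in> L1set M" unfolding cw L1set_def using wi by auto
  have "L1norm M c \<le> (\<integral>x. (\<Sum>i<n. lam i * \<bar>w i x\<bar>) \<partial>M)"
    unfolding L1norm_def cw
  proof (rule integral_mono)
    show "integrable M (\<lambda>x. \<bar>\<Sum>i<n. lam i * w i x\<bar>)"
      using wi by (intro integrable_abs Bochner_Integration.integrable_sum integrable_mult_right) auto
    show "integrable M (\<lambda>x. \<Sum>i<n. lam i * \<bar>w i x\<bar>)"
      using wi by (intro integrable_abs Bochner_Integration.integrable_sum integrable_mult_right) auto
    fix x
    have "\<bar>\<Sum>i<n. lam i * w i x\<bar> \<le> (\<Sum>i<n. \<bar>lam i * w i x\<bar>)" by (rule sum_abs)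
    also have "\<dots> = (\<Sum>i<n. lam i * \<bar>w i x\<bar>)" using L by (intro sum.cong) (auto simp: abs_mult)
    finally show "\<bar>\<Sum>i<n. lam i * w i x\<bar> \<le> (\<Sum>i<n. lam i * \<bar>w i x\<bar>)" .
  qed
  also have "\<dots> = (\<Sum>i<n. lam i * L1norm M (w i))"
    unfolding L1norm_def using wi by (simp add: integral_sum)
  also have "\<dots> \<le> (\<Sum>i<n. lam i * 1)"
    using wb L unfolding L1ball_def by (intro sum_mono mult_left_mono) auto
  finally show ?thesis using ci sl by simp
qed

lemma ccs_nonempty:
  assumes C: "is_L1_ccs M C" shows "C \<noteq> {}"
proof -
  obtain n :: nat and lam :: "nat \<Rightarrow> real" and S :: "nat \<Rightarrow> ('a \<Rightarrow> real) set" where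
    L: "\<forall>i<n. 0 < lam i \<and> lam i \<le> 1 \<and> is_L1_slice M (S i)"
    and Cd: "C = {(\<lambda>x. \<Sum>i<n. lam i * w i x) | w. \<forall>i<n. w i \<in> S i}"
    using C unfolding is_L1_ccs_def by blast
  have "\<forall>i. \<exists>w. i < n \<longrightarrow> w \<in> S i" using L unfolding is_L1_slice_def by blast
  then obtain w where "\<forall>i. i < n \<longrightarrow> w i \<in> S i" by metis
  then show ?thesis unfolding Cd by auto
qed

lemma ccs_avoid:
  fixes z :: "'a \<Rightarrow> real"
  assumes noatom: "\<not> (\<exists>A. is_atom M A \<and> emeasure M A < \<infinity>)"
    and nz: "\<exists>w0\<in>L1set M. L1norm M w0 > 0"
    and C: "is_L1_ccs M C" and z: "z \<in> L1set M" and eps: "\<epsilon> > 0"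
  shows "\<exists>u\<in>C. u \<in> L1set M \<and> L1norm M u = 1 \<and> L1norm M (\<lambda>x. z x - u x) \<ge> L1norm M z + 1 - \<epsilon>"
proof -
  obtain n :: nat and lam :: "nat \<Rightarrow> real" and S :: "nat \<Rightarrow> ('a \<Rightarrow> real) set" where
    n: "n \<ge> 1" and L: "\<forall>i<n. 0 < lam i \<and> lam i \<le> 1 \<and> is_L1_slice M (S i)"
    and sl: "(\<Sum>i<n. lam i) = 1" and Cd: "C = {(\<lambda>x. \<Sum>i<n. lam i * w i x) | w. \<forall>i<n. w i \<in> S i}"
    using C unfolding is_L1_ccs_def by blast
  have Sl: "\<forall>i<n. is_L1_slice M (S i)" using L by blast
  define e where "e = \<epsilon> / (2 * real n)"
  have e: "e > 0" using eps n unfolding e_def by simp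
  obtain v E where VE: "\<forall>i<n. v i \<in> S i \<and> v i \<in> L1set M \<and> L1norm M (v i) = 1 \<and> E i \<in> sets M
     \<and> (\<forall>x. x \<notin> E i \<longrightarrow> v i x = 0) \<and> (\<integral>x. indicator (E i) x * \<bar>z x\<bar> \<partial>M) \<le> e
     \<and> (\<forall>j<n. j \<noteq> i \<longrightarrow> E i \<inter> E j = {})"
    using core_select[OF noatom nz Sl z e] by blast
  define u where "u = (\<lambda>x. \<Sum>i<n. lam i * v i x)"
  have uC: "u \<in> C" unfolding Cd u_def using VE by blast
  have vi: "integrable M (v i)" if "i < n" for i using VE that unfolding L1set_def by auto
  have uL: "u \<in> L1set M" unfolding u_def L1set_def using vi by auto
  have pw: "\<bar>u x\<bar> = (\<Sum>i<n. lam i * \<bar>v i x\<bar>)" for x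
  proof (cases "\<exists>j<n. x \<in> E j")
    case True
    then obtain j where j: "j < n" "x \<in> E j" by blast
    have z: "v i x = 0" if "i < n" "i \<noteq> j" for i
    proof -
      have "x \<notin> E i" using VE j that by blast
      then show ?thesis using VE that by blast
    qed
    have "u x = lam j * v j x" unfolding u_def by (rule sum_single[OF j(1)]) (simp add: z)
    moreover have "(\<Sum>i<n. lam i * \<bar>v i x\<bar>) = lam j * \<bar>v j x\<bar>" by (rule sum_single[OF j(1)]) (simp add: z)
    moreover have "lam j > 0" using L j by blast
    ultimately show ?thesis by (simp add: abs_mult)
  next
    case False
    then have "v i x = 0" if "i < n" for i using VE that by blast
    then show ?thesis unfolding u_def by simp
  qed
  have un: "L1norm M u = 1"
  proof -
    have "L1norm M u = (\<integral>x. (\<Sum>i<n. lam i * \<bar>v i x\<bar>) \<partial>M)" unfolding L1norm_def pw ..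
    also have "\<dots> = (\<Sum>i<n. lam i * L1norm M (v i))"
      unfolding L1norm_def using vi by (simp add: integral_sum)
    also have "\<dots> = (\<Sum>i<n. lam i)" using VE by (intro sum.cong) auto
    finally show ?thesis using sl by simp
  qed
  define c where "c x = (\<Sum>i<n. indicator (E i) x :: real)" for x
  have ci: "integrable M (\<lambda>x. c x * \<bar>z x\<bar>)"
  proof -
    have "(\<lambda>x. c x * \<bar>z x\<bar>) = (\<lambda>x. \<Sum>i<n. indicator (E i) x * \<bar>z x\<bar>)"
      unfolding c_def by (simp add: sum_distrib_right)
    moreover have "integrable M (\<lambda>x. \<Sum>i<n. indicator (E i) x * \<bar>z x\<bar>)"
      using VE z by (intro Bochner_Integration.integrable_sum restr_int) auto
    ultimately show ?thesis by simp
  qed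
  have cint: "(\<integral>x. c x * \<bar>z x\<bar> \<partial>M) \<le> \<epsilon> / 2"
  proof -
    have "(\<integral>x. c x * \<bar>z x\<bar> \<partial>M) = (\<integral>x. (\<Sum>i<n. indicator (E i) x * \<bar>z x\<bar>) \<partial>M)"
      unfolding c_def by (simp add: sum_distrib_right)
    also have "\<dots> = (\<Sum>i<n. (\<integral>x. indicator (E i) x * \<bar>z x\<bar> \<partial>M))"
      by (rule Bochner_Integration.integral_sum[where I="{..<n}" and f="\<lambda>i x. indicator (E i) x * \<bar>z x\<bar>"])
         (use VE z in \<open>auto intro: restr_int\<close>)
    also have "\<dots> \<le> (\<Sum>i<n. e)" using VE by (intro sum_mono) auto
    also have "\<dots> = \<epsilon> / 2" unfolding e_def using n by simp
    finally show ?thesis .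
  qed
  have c0: "c x \<ge> 0" for x unfolding c_def by (intro sum_nonneg) auto
  have c1: "c x \<ge> 1" if "u x \<noteq> 0" for x
  proof -
    have "\<exists>j<n. v j x \<noteq> 0"
    proof (rule ccontr)
      assume "\<not> (\<exists>j<n. v j x \<noteq> 0)"
      then have "u x = 0" unfolding u_def by (intro sum.neutral) auto
      with that show False by simp
    qed
    then obtain j where j: "j < n" "v j x \<noteq> 0" by blast
    then have "x \<in> E j" using VE by blast
    then have "indicator (E j) x \<le> c x" unfolding c_def using j(1)
      by (intro member_le_sum[of j "{..<n}" "\<lambda>i. indicator (E i) x :: real"]) auto
    then show ?thesis using \<open>x \<in> E j\<close> by simp
  qed
  have "L1norm M (\<lambda>x. z x - u x) \<ge> L1norm M z + L1norm M u - 2 * (\<integral>x. c x * \<bar>z x\<bar> \<partial>M)"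
    by (rule dist_lemma[OF z uL c0 ci c1])
  then have "L1norm M (\<lambda>x. z x - u x) \<ge> L1norm M z + 1 - \<epsilon>" using un cint by simp
  then show ?thesis using uC uL un by blast
qed



lemma L1norm_add_le:
  assumes "f \<in> L1set M" "g \<in> L1set M"
  shows "L1norm M (\<lambda>x. f x + g x) \<le> L1norm M f + L1norm M g"
proof -
  have "(\<integral>x. \<bar>f x + g x\<bar> \<partial>M) \<le> (\<integral>x. \<bar>f x\<bar> + \<bar>g x\<bar> \<partial>M)"
    by (rule integral_mono) (use assms in \<open>auto simp: L1set_def\<close>)
  also have "\<dots> = (\<integral>x. \<bar>f x\<bar> \<partial>M) + (\<integral>x. \<bar>g x\<bar> \<partial>M)"
    using assms by (simp add: integral_add L1set_def)
  finally show ?thesis unfolding L1norm_def .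
qed

lemma nz_from:
  assumes "\<exists>A\<in>sets M. 0 < emeasure M A \<and> emeasure M A < \<infinity>"
  shows "\<exists>w0\<in>L1set M. L1norm M w0 > 0"
proof -
  obtain A where A: "A \<in> sets M" "0 < emeasure M A" "emeasure M A < \<infinity>" using assms by blast
  have int: "integrable M (\<lambda>x. indicator A x :: real)" using A by (intro integrable_real_indicator) auto
  have "L1norm M (\<lambda>x. indicator A x :: real) = measure M A"
    unfolding L1norm_def using A by simp
  moreover have "measure M A > 0"
  proof -
    have "emeasure M A = ennreal (measure M A)" using A(3) by (intro emeasure_eq_ennreal_measure) auto
    then show ?thesis using A(2) by (metis ennreal_less_zero_iff)
  qed
  ultimately show ?thesis using int unfolding L1set_def by (intro bexI[of _ "\<lambda>x. indicator A x"]) auto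
qed

lemma slice_nonempty:
  assumes "L1_functional M \<phi>" "\<delta> > 0" shows "L1_slice M \<phi> \<delta> \<noteq> {}"
  using dn_approx[OF assms(1), of "L1_dual_norm M \<phi> - \<delta>"] assms(2) unfolding L1_slice_def by auto

lemma P_from_N:
  assumes noatom: "\<not> (\<exists>A. is_atom M A \<and> emeasure M A < \<infinity>)"
    and nz: "\<exists>w0\<in>L1set M. L1norm M w0 > 0"
  shows "\<exists>z. L1_ccs_daugavet_point M z"
proof -
  obtain w0 where w0: "w0 \<in> L1set M" "L1norm M w0 > 0" using nz by blast
  define z where "z = (\<lambda>x. (1 / L1norm M w0) * w0 x)"
  have zL: "z \<in> L1set M" unfolding z_def by (rule L1set_scale[OF w0(1)])
  have "L1norm M z = \<bar>1 / L1norm M w0\<bar> * L1norm M w0" unfolding z_def by (rule L1norm_scale)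
  then have zn: "L1norm M z = 1" using w0 by simp
  have "L1_ccs_daugavet_point M z"
    unfolding L1_ccs_daugavet_point_def
  proof (intro conjI allI impI)
    show "z \<in> L1sphere M" using zL zn unfolding L1sphere_def by simp
    fix C assume C: "is_L1_ccs M C"
    show "(SUP w\<in>C. L1norm M (\<lambda>x. z x - w x)) = 2"
    proof (rule sup_eqT[OF ccs_nonempty[OF C]])
      fix w assume "w \<in> C"
      then have "w \<in> L1set M" "L1norm M w \<le> 1" using ccs_elem_ball[OF C] by auto
      then show "L1norm M (\<lambda>x. z x - w x) \<le> 2" using L1norm_diff_le[OF zL, of w] zn by simp
    next
      fix e :: real assume "e > 0"
      then obtain u where "u \<in> C" "L1norm M (\<lambda>x. z x - u x) \<ge> L1norm M z + 1 - e"
        using ccs_avoid[OF noatom nz C zL] by blast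
      then show "\<exists>w\<in>C. L1norm M (\<lambda>x. z x - w x) \<ge> 2 - e" using zn by auto
    qed
  qed
  then show ?thesis by blast
qed

lemma S_from_N:
  assumes noatom: "\<not> (\<exists>A. is_atom M A \<and> emeasure M A < \<infinity>)"
    and nz: "\<exists>w0\<in>L1set M. L1norm M w0 > 0"
  shows "L1_SD2P M"
  unfolding L1_SD2P_def
proof (intro allI impI)
  fix C assume C: "is_L1_ccs M C"
  show "(SUP p\<in>C \<times> C. L1norm M (\<lambda>x. fst p x - snd p x)) = 2"
  proof (rule sup_eqT)
    show "C \<times> C \<noteq> {}" using ccs_nonempty[OF C] by auto
    fix p assume "p \<in> C \<times> C"
    then have "fst p \<in> L1set M" "L1norm M (fst p) \<le> 1" "snd p \<in> L1set M" "L1norm M (snd p) \<le> 1"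
      using ccs_elem_ball[OF C] by auto
    then show "L1norm M (\<lambda>x. fst p x - snd p x) \<le> 2" using L1norm_diff_le[of "fst p" M "snd p"] by simp
  next
    fix e :: real assume e: "e > 0"
    have zero: "(\<lambda>x. 0::real) \<in> L1set M" unfolding L1set_def by simp
    obtain u where u: "u \<in> C" "u \<in> L1set M" "L1norm M u = 1"
      using ccs_avoid[OF noatom nz C zero e] by blast
    obtain u' where u': "u' \<in> C" "L1norm M (\<lambda>x. u x - u' x) \<ge> L1norm M u + 1 - e"
      using ccs_avoid[OF noatom nz C u(2) e] by blast
    show "\<exists>p\<in>C \<times> C. L1norm M (\<lambda>x. fst p x - snd p x) \<ge> 2 - e"
      using u u' by (intro bexI[of _ "(u, u')"]) auto
  qed
qed

lemma D_from_N:
  assumes noatom: "\<not> (\<exists>A. is_atom M A \<and> emeasure M A < \<infinity>)"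
    and nz: "\<exists>w0\<in>L1set M. L1norm M w0 > 0"
  shows "L1_daugavet M"
  unfolding L1_daugavet_def
proof (intro allI impI, elim conjE)
  fix \<phi> g assume \<phi>: "L1_functional M \<phi>" and n0: "L1_dual_norm M \<phi> \<noteq> 0"
    and gL: "g \<in> L1set M" and g0: "L1norm M g \<noteq> 0"
  define n where "n = L1_dual_norm M \<phi>"
  define G where "G = L1norm M g"
  have np: "n > 0" using n0 dn_nonneg[OF \<phi>] unfolding n_def by simp
  have Gp: "G > 0" using g0 L1norm_nonneg[of M g] unfolding G_def by simp
  show "(SUP f\<in>L1ball M. L1norm M (\<lambda>x. f x + \<phi> f * g x)) = 1 + L1_dual_norm M \<phi> * L1norm M g"
    unfolding n_def[symmetric] G_def[symmetric]
  proof (rule sup_eqT)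
    show "L1ball M \<noteq> {}" using zero_in_ball by auto
    fix f assume f: "f \<in> L1ball M"
    have fL: "f \<in> L1set M" "L1norm M f \<le> 1" using f unfolding L1ball_def by auto
    have "L1norm M (\<lambda>x. f x + \<phi> f * g x) \<le> L1norm M f + L1norm M (\<lambda>x. \<phi> f * g x)"
      by (rule L1norm_add_le[OF fL(1) L1set_scale[OF gL]])
    also have "L1norm M (\<lambda>x. \<phi> f * g x) = \<bar>\<phi> f\<bar> * G" unfolding G_def by (rule L1norm_scale)
    also have "\<bar>\<phi> f\<bar> * G \<le> n * G" using dn_upper[OF \<phi> f] Gp unfolding n_def by (intro mult_right_mono) auto
    finally show "L1norm M (\<lambda>x. f x + \<phi> f * g x) \<le> 1 + n * G" using fL(2) by simp
  next
    fix e :: real assume e: "e > 0"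
    define d where "d = min (n / 2) (e / (G + 2 * n))"
    have d3: "d * (G + 2 * n) \<le> e"
    proof -
      have "d \<le> e / (G + 2 * n)" unfolding d_def by simp
      moreover have "G + 2 * n > 0" using np Gp by simp
      ultimately show ?thesis by (simp add: pos_le_divide_eq)
    qed
    have d2: "d \<le> n / 2" unfolding d_def by (rule min.cobounded1)
    have d1: "d > 0" unfolding d_def using np Gp e by (simp add: add_pos_pos)
    have d: "d > 0" "d \<le> n / 2" "d * (G + 2 * n) \<le> e"
      using d1 d3 d2 by auto
    define S0 where "S0 = L1_slice M \<phi> d"
    have S0: "is_L1_slice M S0" unfolding is_L1_slice_def S0_def using slice_nonempty[OF \<phi> d(1)] \<phi> d(1) by blast
    have Sl: "\<forall>i<(1::nat). is_L1_slice M ((\<lambda>i. S0) i)" using S0 by simp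
    obtain V E where VE: "\<forall>i<(1::nat). V i \<in> S0 \<and> V i \<in> L1set M \<and> L1norm M (V i) = 1 \<and> E i \<in> sets M
     \<and> (\<forall>x. x \<notin> E i \<longrightarrow> V i x = 0) \<and> (\<integral>x. indicator (E i) x * \<bar>g x\<bar> \<partial>M) \<le> d
     \<and> (\<forall>j<1. j \<noteq> i \<longrightarrow> E i \<inter> E j = {})"
      using core_select[OF noatom nz Sl gL d(1)] by auto
    define v where "v = V 0"
    define E0 where "E0 = E 0"
    have v: "v \<in> S0" "v \<in> L1set M" "L1norm M v = 1" "E0 \<in> sets M" "\<And>x. x \<notin> E0 \<Longrightarrow> v x = 0"
      "(\<integral>x. indicator E0 x * \<bar>g x\<bar> \<partial>M) \<le> d"
      using VE unfolding v_def E0_def by auto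
    have vb: "v \<in> L1ball M" and va: "\<phi> v > n - d" using v(1) unfolding S0_def L1_slice_def n_def by auto
    define a where "a = \<phi> v"
    have a: "a > 0" "a \<le> n" "a > n - d"
      using va d dn_upper[OF \<phi> vb] unfolding a_def n_def by auto
    have ci: "integrable M (\<lambda>x. indicator E0 x * \<bar>a * g x\<bar>)"
      using restr_int[OF L1set_scale[OF gL] v(4), of a] .
    have c1: "indicator E0 x \<ge> (1::real)" if "- v x \<noteq> 0" for x
    proof -
      have "x \<in> E0" using v(5)[of x] that by auto
      then show ?thesis by simp
    qed
    have DL: "L1norm M (\<lambda>x. a * g x - - v x) \<ge> L1norm M (\<lambda>x. a * g x) + L1norm M (\<lambda>x. - v x)
              - 2 * (\<integral>x. indicator E0 x * \<bar>a * g x\<bar> \<partial>M)"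
      by (rule dist_lemma[OF L1set_scale[OF gL] L1set_scale[OF v(2), of "-1", simplified] _ ci c1]) auto
    have e1: "L1norm M (\<lambda>x. a * g x) = a * G" unfolding G_def using L1norm_scale[of M a g] a by simp
    have e2: "L1norm M (\<lambda>x. - v x) = 1" using v(3) unfolding L1norm_def by simp
    have e3: "(\<integral>x. indicator E0 x * \<bar>a * g x\<bar> \<partial>M) = a * (\<integral>x. indicator E0 x * \<bar>g x\<bar> \<partial>M)"
    proof -
      have "(\<lambda>x. indicator E0 x * \<bar>a * g x\<bar>) = (\<lambda>x. a * (indicator E0 x * \<bar>g x\<bar>))"
        using a by (auto simp: abs_mult)
      then show ?thesis by simp
    qed
    have e4: "(\<lambda>x. a * g x - - v x) = (\<lambda>x. v x + \<phi> v * g x)" unfolding a_def by auto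
    have "L1norm M (\<lambda>x. v x + \<phi> v * g x) \<ge> a * G + 1 - 2 * (a * d)"
    proof -
      have "a * (\<integral>x. indicator E0 x * \<bar>g x\<bar> \<partial>M) \<le> a * d" using v(6) a by (intro mult_left_mono) auto
      then show ?thesis using DL e1 e2 e3 e4 by simp
    qed
    moreover have "a * G + 1 - 2 * (a * d) \<ge> 1 + n * G - e"
    proof -
      have "(n - d) * G \<le> a * G" using a Gp by (intro mult_right_mono) auto
      moreover have "a * d \<le> n * d" using a d by (intro mult_right_mono) auto
      ultimately have "a * G + 1 - 2 * (a * d) \<ge> 1 + n * G - d * (G + 2 * n)" by (simp add: algebra_simps)
      then show ?thesis using d(3) by simp
    qed
    ultimately show "\<exists>f\<in>L1ball M. L1norm M (\<lambda>x. f x + \<phi> f * g x) \<ge> 1 + n * G - e"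
      using vb by (intro bexI[of _ v]) auto
  qed
qed



lemma atom_abs:
  fixes w :: "'a \<Rightarrow> real"
  assumes A: "is_atom M A" and w: "integrable M w"
  shows "(\<integral>x. indicator A x * \<bar>w x\<bar> \<partial>M) = \<bar>\<integral>x. indicator A x * w x \<partial>M\<bar>"
proof -
  have As[measurable]: "A \<in> sets M" using A unfolding is_atom_def by auto
  have wm[measurable]: "w \<in> borel_measurable M" using w by auto
  define P where "P = A \<inter> {x\<in>space M. w x > 0}"
  have Ps: "P \<in> sets M" unfolding P_def using As by measurable
  have "emeasure M P = 0 \<or> emeasure M (A - P) = 0"
    using A Ps unfolding is_atom_def P_def by auto
  then show ?thesis
  proof
    assume P0: "emeasure M P = 0"
    have ae: "AE x in M. indicator A x * \<bar>w x\<bar> = - (indicator A x * w x)"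
    proof (rule AE_I')
      show "P \<in> null_sets M" using P0 Ps by auto
      show "{x \<in> space M. \<not> indicator A x * \<bar>w x\<bar> = - (indicator A x * w x)} \<subseteq> P"
        unfolding P_def by (auto simp: indicator_def)
    qed
    have e: "(\<integral>x. indicator A x * \<bar>w x\<bar> \<partial>M) = (\<integral>x. - (indicator A x * w x) \<partial>M)"
      by (rule integral_cong_AE[OF _ _ ae]) measurable
    have "(\<integral>x. indicator A x * \<bar>w x\<bar> \<partial>M) \<ge> 0" by (intro integral_nonneg_AE) auto
    then show ?thesis using e by simp
  next
    assume P0: "emeasure M (A - P) = 0"
    have ae: "AE x in M. indicator A x * \<bar>w x\<bar> = indicator A x * w x"
    proof (rule AE_I')
      show "A - P \<in> null_sets M" using P0 Ps As by auto
      show "{x \<in> space M. \<not> indicator A x * \<bar>w x\<bar> = indicator A x * w x} \<subseteq> A - P"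
        unfolding P_def by (auto simp: indicator_def)
    qed
    have e: "(\<integral>x. indicator A x * \<bar>w x\<bar> \<partial>M) = (\<integral>x. indicator A x * w x \<partial>M)"
      by (rule integral_cong_AE[OF _ _ ae]) measurable
    have "(\<integral>x. indicator A x * \<bar>w x\<bar> \<partial>M) \<ge> 0" by (intro integral_nonneg_AE) auto
    then show ?thesis using e by simp
  qed
qed

lemma restr_le_norm:
  fixes w :: "'a \<Rightarrow> real"
  assumes "w \<in> L1set M" "A \<in> sets M"
  shows "(\<integral>x. indicator A x * \<bar>w x\<bar> \<partial>M) \<le> L1norm M w"
  unfolding L1norm_def
  by (rule integral_mono) (use assms restr_int[OF assms] in \<open>auto simp: L1set_def indicator_def\<close>)

lemma phiA_bound:
  fixes w :: "'a \<Rightarrow> real"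
  assumes "w \<in> L1set M" "A \<in> sets M"
  shows "\<bar>\<integral>x. indicator A x * w x \<partial>M\<bar> \<le> (\<integral>x. indicator A x * \<bar>w x\<bar> \<partial>M)"
proof -
  have "\<bar>\<integral>x. indicator A x * w x \<partial>M\<bar> \<le> (\<integral>x. \<bar>indicator A x * w x\<bar> \<partial>M)"
    by (rule integral_abs_bound)
  then show ?thesis by (simp add: abs_mult)
qed

lemma phiA_functional:
  assumes As: "A \<in> sets M"
  shows "L1_functional M (\<lambda>f. \<integral>x. indicator A x * f x \<partial>M)"
  unfolding L1_functional_def
proof (intro conjI ballI allI)
  fix f g assume f: "f \<in> L1set M" and g: "g \<in> L1set M"
  have fi: "integrable M (\<lambda>x. indicator A x * f x)" and gi: "integrable M (\<lambda>x. indicator A x * g x)"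
    using restr_L1set[OF f As] restr_L1set[OF g As] unfolding L1set_def by auto
  show "(\<integral>x. indicator A x * (f x + g x) \<partial>M) = (\<integral>x. indicator A x * f x \<partial>M) + (\<integral>x. indicator A x * g x \<partial>M)"
    using fi gi by (simp add: distrib_left)
next
  fix f c assume f: "f \<in> L1set M"
  show "(\<integral>x. indicator A x * (c * f x) \<partial>M) = c * (\<integral>x. indicator A x * f x \<partial>M)"
    by (simp add: mult.left_commute)
next
  show "\<exists>C. \<forall>f\<in>L1set M. \<bar>\<integral>x. indicator A x * f x \<partial>M\<bar> \<le> C * L1norm M f"
    using phiA_bound restr_le_norm As by (intro exI[of _ 1]) (fastforce intro: order_trans)
qed

lemma neg_functional:
  assumes "L1_functional M \<phi>" shows "L1_functional M (\<lambda>f. - \<phi> f)"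
  using assms unfolding L1_functional_def by auto

lemma neg_dual_norm: "L1_dual_norm M (\<lambda>f. - \<phi> f) = L1_dual_norm M \<phi>"
  unfolding L1_dual_norm_def by simp

lemma atom_basic:
  assumes A: "is_atom M A" "emeasure M A < \<infinity>"
  defines "m \<equiv> measure M A"
  shows "m > 0" "A \<in> sets M"
    and "(\<lambda>x. indicator A x / m) \<in> L1set M" "L1norm M (\<lambda>x. indicator A x / m) = 1"
    and "(\<integral>x. indicator A x * (indicator A x / m) \<partial>M) = 1"
    and "L1_dual_norm M (\<lambda>f. \<integral>x. indicator A x * f x \<partial>M) = 1"
proof -
  show As: "A \<in> sets M" using A unfolding is_atom_def by auto
  have "emeasure M A = ennreal m" unfolding m_def using A(2) by (intro emeasure_eq_ennreal_measure) auto
  then show mp: "m > 0" using A(1) unfolding is_atom_def by (metis ennreal_less_zero_iff)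
  have int: "integrable M (\<lambda>x. indicator A x :: real)" using A As by (intro integrable_real_indicator) auto
  show eL: "(\<lambda>x. indicator A x / m) \<in> L1set M" unfolding L1set_def using int by auto
  have i1: "(\<integral>x. indicator A x \<partial>M) = m" unfolding m_def using As A(2) by simp
  show en: "L1norm M (\<lambda>x. indicator A x / m) = 1"
    unfolding L1norm_def using mp i1 by simp
  have "(\<lambda>x. indicator A x * (indicator A x / m)) = (\<lambda>x. indicator A x / m :: real)"
    by (auto simp: indicator_def)
  then show e1: "(\<integral>x. indicator A x * (indicator A x / m) \<partial>M) = 1" using i1 mp by simp
  let ?\<phi> = "\<lambda>f. \<integral>x. indicator A x * f x \<partial>M"
  have \<phi>: "L1_functional M ?\<phi>" by (rule phiA_functional[OF As])
  show "L1_dual_norm M ?\<phi> = 1"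
  proof (rule antisym)
    show "L1_dual_norm M ?\<phi> \<le> 1"
      unfolding L1_dual_norm_def
    proof (rule cSUP_least)
      show "L1ball M \<noteq> {}" using zero_in_ball by auto
      fix f assume "f \<in> L1ball M"
      then have "f \<in> L1set M" "L1norm M f \<le> 1" unfolding L1ball_def by auto
      then show "\<bar>?\<phi> f\<bar> \<le> 1" using phiA_bound[of f M A] restr_le_norm[of f M A] As by linarith
    qed
    have "(\<lambda>x. indicator A x / m) \<in> L1ball M" using eL en unfolding L1ball_def by simp
    then show "1 \<le> L1_dual_norm M ?\<phi>" using dn_upper[OF \<phi>] e1 by force
  qed
qed



lemma aux_ineq:
  fixes a b :: real
  assumes "a > 7/8" "b < -(7/8)"
  shows "\<bar>1/2 * a + 1/2 * b\<bar> + 1/2 * (1 - a) + 1/2 * (1 - - b) \<le> 1/2"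
  using assms by (cases "a + b \<ge> 0") (simp_all add: abs_if field_simps)

lemma D_fails:
  assumes A: "is_atom M A" "emeasure M A < \<infinity>"
  shows "\<not> L1_daugavet M"
proof
  assume D: "L1_daugavet M"
  define m where "m = measure M A"
  note AB = atom_basic[OF A, folded m_def]
  let ?\<phi> = "\<lambda>f. \<integral>x. indicator A x * f x \<partial>M"
  define g where "g = (\<lambda>x. - (indicator A x / m))"
  have \<phi>: "L1_functional M ?\<phi>" by (rule phiA_functional[OF AB(2)])
  have gL: "g \<in> L1set M" unfolding g_def using L1set_scale[OF AB(3), of "-1"] by simp
  have "L1norm M g = L1norm M (\<lambda>x. indicator A x / m)" unfolding g_def L1norm_def by simp
  then have gn: "L1norm M g = 1" using AB(4) by simp
  have \<phi>g: "?\<phi> g = -1" unfolding g_def using AB(5) by simp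
  have eq: "(SUP f\<in>L1ball M. L1norm M (\<lambda>x. f x + ?\<phi> f * g x)) = 2"
    using D \<phi> gL gn AB(6) unfolding L1_daugavet_def by (drule_tac x="?\<phi>" in spec, drule_tac x=g in spec) simp
  have "(SUP f\<in>L1ball M. L1norm M (\<lambda>x. f x + ?\<phi> f * g x)) \<le> 1"
  proof (rule cSUP_least)
    show "L1ball M \<noteq> {}" using zero_in_ball by auto
    fix f assume f: "f \<in> L1ball M"
    have fL: "f \<in> L1set M" "L1norm M f \<le> 1" using f unfolding L1ball_def by auto
    define a where "a = ?\<phi> f"
    define h where "h = (\<lambda>x. f x + a * g x)"
    have hL: "h \<in> L1set M" unfolding h_def by (intro L1set_add L1set_scale fL gL)
    have "?\<phi> h = ?\<phi> f + ?\<phi> (\<lambda>x. a * g x)" unfolding h_def by (rule func_add[OF \<phi> fL(1) L1set_scale[OF gL]])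
    also have "?\<phi> (\<lambda>x. a * g x) = a * ?\<phi> g" by (rule func_scale[OF \<phi> gL])
    finally have \<phi>h: "?\<phi> h = 0" using \<phi>g unfolding a_def by simp
    have pw: "\<bar>h x\<bar> = indicator A x * \<bar>h x\<bar> + (\<bar>f x\<bar> - indicator A x * \<bar>f x\<bar>)" for x
      unfolding h_def g_def by (auto simp: indicator_def)
    have hi: "integrable M (\<lambda>x. \<bar>h x\<bar>)" "integrable M (\<lambda>x. \<bar>f x\<bar>)" using hL fL unfolding L1set_def by auto
    have "L1norm M h = (\<integral>x. indicator A x * \<bar>h x\<bar> \<partial>M) + (L1norm M f - (\<integral>x. indicator A x * \<bar>f x\<bar> \<partial>M))"
      unfolding L1norm_def
      apply (subst pw)
      using restr_int[OF hL AB(2)] restr_int[OF fL(1) AB(2)] hi by simp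
    also have "(\<integral>x. indicator A x * \<bar>h x\<bar> \<partial>M) = 0"
      using atom_abs[OF A(1), of h] hL \<phi>h unfolding L1set_def by simp
    finally have "L1norm M h \<le> L1norm M f" using restr_nonneg[of M A f] by simp
    then show "L1norm M (\<lambda>x. f x + ?\<phi> f * g x) \<le> 1" using fL unfolding h_def a_def by simp
  qed
  then show False using eq by simp
qed

lemma small_ccs:
  fixes M :: "'a measure"
  assumes A: "is_atom M A" "emeasure M A < \<infinity>"
  shows "\<exists>C. is_L1_ccs M C \<and> (\<forall>c\<in>C. c \<in> L1set M \<and> L1norm M c \<le> 1 / 2)"
proof -
  define m where "m = measure M A"
  note AB = atom_basic[OF A, folded m_def]
  define \<phi> :: "('a \<Rightarrow> real) \<Rightarrow> real" where "\<phi> = (\<lambda>f. \<integral>x. indicator A x * f x \<partial>M)"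
  have \<phi>: "L1_functional M \<phi>" unfolding \<phi>_def by (rule phiA_functional[OF AB(2)])
  have \<phi>n: "L1_dual_norm M \<phi> = 1" unfolding \<phi>_def by (rule AB(6))
  have \<psi>: "L1_functional M (\<lambda>f. - \<phi> f)" by (rule neg_functional[OF \<phi>])
  have \<psi>n: "L1_dual_norm M (\<lambda>f. - \<phi> f) = 1" using \<phi>n neg_dual_norm by metis
  define \<delta> where "\<delta> = (1/8::real)"
  define S where "S i = (if i = 0 then L1_slice M \<phi> \<delta> else L1_slice M (\<lambda>f. - \<phi> f) \<delta>)" for i :: nat
  define lam where "lam i = (1/2::real)" for i :: nat
  define C where "C = {(\<lambda>x. \<Sum>i<2. lam i * w i x) | w. \<forall>i<2. w i \<in> S i}"
  have Cc: "is_L1_ccs M C"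
    unfolding is_L1_ccs_def
  proof (intro exI conjI)
    show "(1::nat) \<le> 2" by simp
    have d: "\<delta> > 0" unfolding \<delta>_def by simp
    have s1: "is_L1_slice M (L1_slice M \<phi> \<delta>)" unfolding is_L1_slice_def using slice_nonempty[OF \<phi> d] \<phi> d by blast
    have s2: "is_L1_slice M (L1_slice M (\<lambda>f. - \<phi> f) \<delta>)" unfolding is_L1_slice_def using slice_nonempty[OF \<psi> d] \<psi> d by blast
    show "\<forall>i<2. 0 < lam i \<and> lam i \<le> 1 \<and> is_L1_slice M (S i)"
      unfolding lam_def S_def using s1 s2 by auto
    show "(\<Sum>i<2. lam i) = 1" unfolding lam_def by simp
  qed (rule C_def)
  have phi_le: "\<bar>\<phi> w\<bar> \<le> (\<integral>x. indicator A x * \<bar>w x\<bar> \<partial>M)" if "w \<in> L1set M" for w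
    unfolding \<phi>_def by (rule phiA_bound[OF that AB(2)])
  have small: "c \<in> L1set M \<and> L1norm M c \<le> 1 / 2" if c: "c \<in> C" for c
  proof -
    obtain w where w: "\<forall>i<2. w i \<in> S i" and cw: "c = (\<lambda>x. \<Sum>i<2. lam i * w i x)" using c unfolding C_def by blast
    have w0: "w 0 \<in> L1ball M" "\<phi> (w 0) > 1 - \<delta>" using w[rule_format, of 0] \<phi>n unfolding S_def L1_slice_def by auto
    have w1: "w 1 \<in> L1ball M" "- \<phi> (w 1) > 1 - \<delta>" using w[rule_format, of 1] \<psi>n unfolding S_def L1_slice_def by auto
    define u where "u = w 0" define v where "v = w 1"
    have uL: "u \<in> L1set M" "L1norm M u \<le> 1" using w0 unfolding u_def L1ball_def by auto
    have vL: "v \<in> L1set M" "L1norm M v \<le> 1" using w1 unfolding v_def L1ball_def by auto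
    have cuv: "c = (\<lambda>x. (1/2) * u x + (1/2) * v x)" unfolding cw u_def v_def lam_def by (simp add: numeral_2_eq_2)
    have cL: "c \<in> L1set M" unfolding cuv by (intro L1set_add L1set_scale uL vL)
    have \<phi>c: "\<phi> c = (1/2) * \<phi> u + (1/2) * \<phi> v"
    proof -
      have "\<phi> c = \<phi> (\<lambda>x. (1/2) * u x) + \<phi> (\<lambda>x. (1/2) * v x)"
        unfolding cuv by (rule func_add[OF \<phi> L1set_scale[OF uL(1)] L1set_scale[OF vL(1)]])
      also have "\<phi> (\<lambda>x. (1/2) * u x) = (1/2) * \<phi> u" by (rule func_scale[OF \<phi> uL(1)])
      also have "\<phi> (\<lambda>x. (1/2) * v x) = (1/2) * \<phi> v" by (rule func_scale[OF \<phi> vL(1)])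
      finally show ?thesis .
    qed
    have pu: "\<phi> u > 1 - \<delta>" "\<phi> v < - (1 - \<delta>)" using w0 w1 unfolding u_def v_def by auto
    have ru: "\<bar>\<phi> u\<bar> \<le> (\<integral>x. indicator A x * \<bar>u x\<bar> \<partial>M)" "(\<integral>x. indicator A x * \<bar>u x\<bar> \<partial>M) \<le> L1norm M u"
      using phi_le[OF uL(1)] restr_le_norm[OF uL(1) AB(2)] by auto
    have rv: "\<bar>\<phi> v\<bar> \<le> (\<integral>x. indicator A x * \<bar>v x\<bar> \<partial>M)" "(\<integral>x. indicator A x * \<bar>v x\<bar> \<partial>M) \<le> L1norm M v"
      using phi_le[OF vL(1)] restr_le_norm[OF vL(1) AB(2)] by auto
    have inA: "(\<integral>x. indicator A x * \<bar>c x\<bar> \<partial>M) = \<bar>\<phi> c\<bar>"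
      unfolding \<phi>_def by (rule atom_abs[OF A(1)]) (use cL in \<open>auto simp: L1set_def\<close>)
    have offA: "L1norm M c - (\<integral>x. indicator A x * \<bar>c x\<bar> \<partial>M)
        \<le> (1/2) * (L1norm M u - (\<integral>x. indicator A x * \<bar>u x\<bar> \<partial>M))
          + (1/2) * (L1norm M v - (\<integral>x. indicator A x * \<bar>v x\<bar> \<partial>M))"
    proof -
      have ic: "integrable M (\<lambda>x. \<bar>c x\<bar> - indicator A x * \<bar>c x\<bar>)"
        using cL restr_int[OF cL AB(2)] unfolding L1set_def by auto
      have iuv: "integrable M (\<lambda>x. (1/2) * (\<bar>u x\<bar> - indicator A x * \<bar>u x\<bar>) + (1/2) * (\<bar>v x\<bar> - indicator A x * \<bar>v x\<bar>))"
        using uL vL restr_int[OF uL(1) AB(2)] restr_int[OF vL(1) AB(2)] unfolding L1set_def by auto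
      have "(\<integral>x. \<bar>c x\<bar> - indicator A x * \<bar>c x\<bar> \<partial>M)
           \<le> (\<integral>x. (1/2) * (\<bar>u x\<bar> - indicator A x * \<bar>u x\<bar>) + (1/2) * (\<bar>v x\<bar> - indicator A x * \<bar>v x\<bar>) \<partial>M)"
      proof (rule integral_mono[OF ic iuv])
        fix x
        have "\<bar>c x\<bar> \<le> (1/2) * \<bar>u x\<bar> + (1/2) * \<bar>v x\<bar>" unfolding cuv by (simp add: abs_triangle_ineq[THEN order_trans])
        then show "\<bar>c x\<bar> - indicator A x * \<bar>c x\<bar> \<le> (1/2) * (\<bar>u x\<bar> - indicator A x * \<bar>u x\<bar>) + (1/2) * (\<bar>v x\<bar> - indicator A x * \<bar>v x\<bar>)"
          by (auto simp: indicator_def)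
      qed
      then show ?thesis
        using cL uL vL restr_int[OF cL AB(2)] restr_int[OF uL(1) AB(2)] restr_int[OF vL(1) AB(2)]
        unfolding L1norm_def L1set_def by simp
    qed
    have h1: "L1norm M u - (\<integral>x. indicator A x * \<bar>u x\<bar> \<partial>M) \<le> 1 - \<bar>\<phi> u\<bar>" using ru uL by linarith
    have h2: "L1norm M v - (\<integral>x. indicator A x * \<bar>v x\<bar> \<partial>M) \<le> 1 - \<bar>\<phi> v\<bar>" using rv vL by linarith
    have "L1norm M c \<le> \<bar>\<phi> c\<bar> + (1/2) * (1 - \<bar>\<phi> u\<bar>) + (1/2) * (1 - \<bar>\<phi> v\<bar>)"
    proof -
      have "(1/2) * (L1norm M u - (\<integral>x. indicator A x * \<bar>u x\<bar> \<partial>M)) \<le> (1/2) * (1 - \<bar>\<phi> u\<bar>)"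
        using h1 by (rule mult_left_mono) simp
      moreover have "(1/2) * (L1norm M v - (\<integral>x. indicator A x * \<bar>v x\<bar> \<partial>M)) \<le> (1/2) * (1 - \<bar>\<phi> v\<bar>)"
        using h2 by (rule mult_left_mono) simp
      ultimately show ?thesis using offA inA by linarith
    qed
    also have "\<dots> \<le> 1/2"
    proof -
      have a: "\<bar>\<phi> u\<bar> = \<phi> u" using pu unfolding \<delta>_def by simp
      have b: "\<bar>\<phi> v\<bar> = - \<phi> v" using pu unfolding \<delta>_def by simp
      show ?thesis unfolding a b \<phi>c by (rule aux_ineq) (use pu in \<open>simp_all add: \<delta>_def\<close>)
    qed
    finally show ?thesis using cL by simp
  qed
  then show ?thesis using Cc by blast
qed

lemma S_fails:
  assumes A: "is_atom M A" "emeasure M A < \<infinity>"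
  shows "\<not> L1_SD2P M"
proof
  assume S: "L1_SD2P M"
  obtain C where C: "is_L1_ccs M C" "\<forall>c\<in>C. c \<in> L1set M \<and> L1norm M c \<le> 1 / 2" using small_ccs[OF A] by blast
  have eq: "(SUP p\<in>C \<times> C. L1norm M (\<lambda>x. fst p x - snd p x)) = 2" using S C(1) unfolding L1_SD2P_def by blast
  have "(SUP p\<in>C \<times> C. L1norm M (\<lambda>x. fst p x - snd p x)) \<le> 1"
  proof (rule cSUP_least)
    show "C \<times> C \<noteq> {}" using ccs_nonempty[OF C(1)] by auto
    fix p assume "p \<in> C \<times> C"
    then have "fst p \<in> L1set M" "L1norm M (fst p) \<le> 1/2" "snd p \<in> L1set M" "L1norm M (snd p) \<le> 1/2" using C(2) by auto
    then show "L1norm M (\<lambda>x. fst p x - snd p x) \<le> 1" using L1norm_diff_le[of "fst p" M "snd p"] by simp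
  qed
  then show False using eq by simp
qed

lemma P_fails:
  assumes A: "is_atom M A" "emeasure M A < \<infinity>"
  shows "\<not> (\<exists>z. L1_ccs_daugavet_point M z)"
proof
  assume "\<exists>z. L1_ccs_daugavet_point M z"
  then obtain z where z: "z \<in> L1sphere M" "\<And>C. is_L1_ccs M C \<Longrightarrow> (SUP w\<in>C. L1norm M (\<lambda>x. z x - w x)) = 2"
    unfolding L1_ccs_daugavet_point_def by blast
  obtain C where C: "is_L1_ccs M C" "\<forall>c\<in>C. c \<in> L1set M \<and> L1norm M c \<le> 1 / 2" using small_ccs[OF A] by blast
  have zL: "z \<in> L1set M" "L1norm M z = 1" using z(1) unfolding L1sphere_def by auto
  have "(SUP w\<in>C. L1norm M (\<lambda>x. z x - w x)) \<le> 3/2"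
  proof (rule cSUP_least)
    show "C \<noteq> {}" using ccs_nonempty[OF C(1)] .
    fix w assume "w \<in> C"
    then have "w \<in> L1set M" "L1norm M w \<le> 1/2" using C(2) by auto
    then show "L1norm M (\<lambda>x. z x - w x) \<le> 3/2" using L1norm_diff_le[OF zL(1), of w] zL(2) by simp
  qed
  then show False using z(2)[OF C(1)] by simp
qed

theorem mainTheorem13:
  fixes M :: "'a measure"
  assumes nontrivial: "\<exists>A\<in>sets M. 0 < emeasure M A \<and> emeasure M A < \<infinity>"
  shows "(L1_daugavet M \<longleftrightarrow> (\<exists>z. L1_ccs_daugavet_point M z))
       \<and> ((\<exists>z. L1_ccs_daugavet_point M z) \<longleftrightarrow> L1_SD2P M)
       \<and> (L1_SD2P M \<longleftrightarrow> \<not> (\<exists>A. is_atom M A \<and> emeasure M A < \<infinity>))"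
proof -
  have nz: "\<exists>w0\<in>L1set M. L1norm M w0 > 0" by (rule nz_from[OF nontrivial])
  have 1: "L1_daugavet M \<longleftrightarrow> \<not> (\<exists>A. is_atom M A \<and> emeasure M A < \<infinity>)"
    using D_from_N[OF _ nz] D_fails by blast
  have 2: "(\<exists>z. L1_ccs_daugavet_point M z) \<longleftrightarrow> \<not> (\<exists>A. is_atom M A \<and> emeasure M A < \<infinity>)"
    using P_from_N[OF _ nz] P_fails by blast
  have 3: "L1_SD2P M \<longleftrightarrow> \<not> (\<exists>A. is_atom M A \<and> emeasure M A < \<infinity>)"
    using S_from_N[OF _ nz] S_fails by blast
  show ?thesis using 1 2 3 by blast
qed


end
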